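(* Let $(N,\langle\,,\rangle)$ be a symplectic $L$-vector space of dimension $2n$. Let $\bar J\subset\mathbf Z/2n\mathbf Z$ be non-empty and symmetric with inverse image $J\subset\mathbf Z$, let $k\in J$ with $k+1\notin J$, let $\bar I=\bar J\cup\{\overline{k+1},\overline{-(k+1)}\}$, and let $\ell$ be the smallest element of $J$ with $\ell>k$. Let $f:X^G_{\bar I}\to X^G_{\bar J}$ be the forgetful map and let $\mathbf M=(M_i)_{i\in J}\in X^G_{\bar J}$. Then the map $(M_i)_{i\in I}\mapsto M_{k+1}$ is a bijection from $f^{-1}(\mathbf M)$ onto the set of $O_L$-lattices $M$ in $N$ with $M_k\subset M\subset M_\ell$ and $\dim_{\mathbf F}M/M_k=1$.
   Context: $L$ is the completion of the maximal unramified extension of a finite extension $F$ of $\mathbf Q_p$, $\pi$ a uniformizer of $F$, $O_L$ the integers of $L$, $\mathbf F$ its residue field. For an $O_L$-lattice $\Lambda$, $\Lambda^\perp=\{x\in N:\langle x,\Lambda\rangle\subset O_L\}$. A subset of $\mathbf Z/2n\mathbf Z$ is symmetric if stable under $x\mapsto-x$; $\bar m$ denotes the class of $m\in\mathbf Z$. For non-empty $\bar I$ with inverse image $I$, a periodic lattice chain of type $\bar I$ is a family of $O_L$-lattices $(M_i)_{i\in I}$ with $M_i\subset M_{i'}$, $\mathrm{length}(M_{i'}/M_i)=i'-i$ for $i<i'$ in $I$, and $M_{i+2n}=\pi^{-1}M_i$; it is selfdual if there is $d\in\mathbf Z$ with $M_i^\perp=M_{-i+2nd}$ for all $i\in I$.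 $X^G_{\bar I}$ denotes the set of selfdual periodic lattice chains of type $\bar I$ in $N$. *)

theory Defs
  imports Main
begin

text \<open>Vectors of the 2n-dimensional L-vector space N are modelled as coordinate
functions nat => 'L vanishing outside {0..<2n}.\<close>

definition vecs :: "nat \<Rightarrow> (nat \<Rightarrow> 'L::field) set" where
  "vecs n = {x. \<forall>j\<ge>2*n. x j = 0}"

definition vadd :: "(nat \<Rightarrow> 'L::field) \<Rightarrow> (nat \<Rightarrow> 'L) \<Rightarrow> nat \<Rightarrow> 'L" where
  "vadd x y = (\<lambda>j. x j + y j)"

definition vsc :: "'L::field \<Rightarrow> (nat \<Rightarrow> 'L) \<Rightarrow> nat \<Rightarrow> 'L" where
  "vsc c x = (\<lambda>j. c * x j)"

definition lincomb :: "nat \<Rightarrow> (nat \<Rightarrow> 'L::field) \<Rightarrow> (nat \<Rightarrow> nat \<Rightarrow> 'L) \<Rightarrow> nat \<Rightarrow> 'L" where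
  "lincomb n a b = (\<lambda>j. \<Sum>i<2*n. a i * b i j)"

definition discrete_valued :: "('L::field \<Rightarrow> int) \<Rightarrow> 'L set \<Rightarrow> 'L \<Rightarrow> bool" where
  "discrete_valued v OL \<pi> \<longleftrightarrow>
     (\<forall>x y. x \<noteq> 0 \<longrightarrow> y \<noteq> 0 \<longrightarrow> v (x * y) = v x + v y) \<and>
     (\<forall>x y. x \<noteq> 0 \<longrightarrow> y \<noteq> 0 \<longrightarrow> x + y \<noteq> 0 \<longrightarrow> min (v x) (v y) \<le> v (x + y)) \<and>
     \<pi> \<noteq> 0 \<and> v \<pi> = 1 \<and>
     OL = {x. x = 0 \<or> 0 \<le> v x}"

definition symplectic :: "nat \<Rightarrow> ((nat \<Rightarrow> 'L::field) \<Rightarrow> (nat \<Rightarrow> 'L) \<Rightarrow> 'L) \<Rightarrow> bool" where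
  "symplectic n B \<longleftrightarrow>
     (\<forall>x\<in>vecs n. \<forall>y\<in>vecs n. \<forall>z\<in>vecs n. \<forall>c.
        B (vadd x y) z = B x z + B y z \<and> B z (vadd x y) = B z x + B z y \<and>
        B (vsc c x) z = c * B x z \<and> B z (vsc c x) = c * B z x) \<and>
     (\<forall>x\<in>vecs n. B x x = 0) \<and>
     (\<forall>x\<in>vecs n. (\<forall>y\<in>vecs n. B x y = 0) \<longrightarrow> x = (\<lambda>_. 0))"

definition lattice :: "nat \<Rightarrow> 'L::field set \<Rightarrow> (nat \<Rightarrow> 'L) set \<Rightarrow> bool" where
  "lattice n OL M \<longleftrightarrow>
     (\<exists>b. (\<forall>i<2*n. b i \<in> vecs n) \<and>
          (\<forall>c. lincomb n c b = (\<lambda>_. 0) \<longrightarrow> (\<forall>i<2*n. c i = 0)) \<and>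
          (\<forall>x\<in>vecs n. \<exists>c. x = lincomb n c b) \<and>
          M = {lincomb n a b | a. \<forall>i. a i \<in> OL})"

definition omodule :: "'L::field set \<Rightarrow> (nat \<Rightarrow> 'L) set \<Rightarrow> bool" where
  "omodule OL C \<longleftrightarrow> (\<lambda>_. 0) \<in> C \<and> (\<forall>x\<in>C. \<forall>y\<in>C. vadd x y \<in> C) \<and>
                     (\<forall>a\<in>OL. \<forall>x\<in>C. vsc a x \<in> C)"

text \<open>Length of the OL-module B/A (for A \<subseteq> B): the maximal length of a strictly
increasing chain of OL-submodules from A to B.\<close>

definition olength :: "'L::field set \<Rightarrow> (nat \<Rightarrow> 'L) set \<Rightarrow> (nat \<Rightarrow> 'L) set \<Rightarrow> nat" where
  "olength OL A B = (GREATEST m. \<exists>C. C 0 = A \<and> C m = B \<and>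
        (\<forall>j<m. C j \<subset> C (Suc j)) \<and> (\<forall>j\<le>m. omodule OL (C j)))"

definition dual_lattice ::
  "nat \<Rightarrow> 'L::field set \<Rightarrow> ((nat \<Rightarrow> 'L) \<Rightarrow> (nat \<Rightarrow> 'L) \<Rightarrow> 'L) \<Rightarrow> (nat \<Rightarrow> 'L) set \<Rightarrow> (nat \<Rightarrow> 'L) set" where
  "dual_lattice n OL B \<Lambda> = {x \<in> vecs n. \<forall>y\<in>\<Lambda>. B x y \<in> OL}"

text \<open>Subsets of Z/2nZ are represented by sets of residues in {0..<2n};
the inverse image in Z.\<close>

definition invimg :: "nat \<Rightarrow> int set \<Rightarrow> int set" where
  "invimg n Ibar = {i. i mod (2 * int n) \<in> Ibar}"

definition symmetric_type :: "nat \<Rightarrow> int set \<Rightarrow> bool" where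
  "symmetric_type n Ibar \<longleftrightarrow> Ibar \<subseteq> {0..<2 * int n} \<and> (\<forall>x\<in>Ibar. (- x) mod (2 * int n) \<in> Ibar)"

text \<open>Selfdual periodic lattice chains of type Ibar, as families indexed by I
(extended by the empty set outside I).\<close>

definition XG ::
  "nat \<Rightarrow> 'L::field set \<Rightarrow> 'L \<Rightarrow> ((nat \<Rightarrow> 'L) \<Rightarrow> (nat \<Rightarrow> 'L) \<Rightarrow> 'L) \<Rightarrow> int set
    \<Rightarrow> (int \<Rightarrow> (nat \<Rightarrow> 'L) set) set" where
  "XG n OL \<pi> B Ibar = {M. let I = invimg n Ibar in
      (\<forall>i. i \<notin> I \<longrightarrow> M i = {}) \<and>
      (\<forall>i\<in>I. lattice n OL (M i)) \<and>
      (\<forall>i\<in>I. \<forall>i'\<in>I. i < i' \<longrightarrow> M i \<subseteq> M i' \<and> olength OL (M i) (M i') = nat (i' - i)) \<and>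
      (\<forall>i\<in>I. M (i + 2 * int n) = vsc (inverse \<pi>) ` M i) \<and>
      (\<exists>d::int. \<forall>i\<in>I. dual_lattice n OL B (M i) = M (- i + 2 * int n * d))}"

definition restrict_chain :: "int set \<Rightarrow> (int \<Rightarrow> 'a set) \<Rightarrow> int \<Rightarrow> 'a set" where
  "restrict_chain J M = (\<lambda>i. if i \<in> J then M i else {})"

end

theory Submission
  imports Defs "Jordan_Normal_Form.Determinant"
begin

lemma gram_inverse:
  fixes g :: "nat \<Rightarrow> nat \<Rightarrow> 'a::field"
  assumes inj: "\<And>c. (\<forall>j<m. (\<Sum>i<m. c i * g i j) = 0) \<Longrightarrow> (\<forall>i<m. c i = 0)"
  shows "\<exists>h. \<forall>r<m. \<forall>j<m. (\<Sum>i<m. h r i * g i j) = (if r = j then 1 else 0)"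
proof -
  define G where "G = mat m m (\<lambda>(j,i). g i j)"
  have G: "G \<in> carrier_mat m m" unfolding G_def by simp
  have "det G \<noteq> 0"
  proof
    assume "det G = 0"
    then obtain w where w: "w \<in> carrier_vec m" "w \<noteq> 0\<^sub>v m" "G *\<^sub>v w = 0\<^sub>v m"
      using det_0_iff_vec_prod_zero_field[OF G] by blast
    define c where "c = (\<lambda>i. w $ i)"
    have "\<forall>j<m. (\<Sum>i<m. c i * g i j) = 0"
    proof (intro allI impI)
      fix j assume j: "j < m"
      have "(G *\<^sub>v w) $ j = 0" using w(3) j by simp
      moreover have "(G *\<^sub>v w) $ j = (\<Sum>i<m. g i j * w $ i)"
        using j w(1) unfolding G_def
        by (simp add: mult_mat_vec_def scalar_prod_def lessThan_atLeast0)
      ultimately show "(\<Sum>i<m. c i * g i j) = 0" unfolding c_def by (simp add: mult.commute)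
    qed
    then have "\<forall>i<m. c i = 0" using inj by blast
    then have "w = 0\<^sub>v m" using w(1) unfolding c_def by (intro eq_vecI) auto
    with w(2) show False by simp
  qed
  from det_non_zero_imp_unit[OF G this, of "()"]
  obtain K where K: "K \<in> carrier_mat m m" "G * K = 1\<^sub>m m"
    unfolding Units_def ring_mat_def by auto
  show ?thesis
  proof (intro exI allI impI)
    fix r j assume r: "r < m" and j: "j < m"
    have "(G * K) $$ (j, r) = (if r = j then 1 else 0)" using K(2) r j by simp
    moreover have "(G * K) $$ (j, r) = (\<Sum>i<m. K $$ (i, r) * g i j)"
      using K(1) r j unfolding G_def
      by (simp add: times_mat_def scalar_prod_def lessThan_atLeast0 mult.commute)
    ultimately show "(\<Sum>i<m. K $$ (i, r) * g i j) = (if r = j then 1 else 0)" by simp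
  qed
qed


locale setting =
  fixes v :: "'L::field \<Rightarrow> int" and OL :: "'L set" and \<pi> :: 'L
    and n :: nat and B :: "(nat \<Rightarrow> 'L) \<Rightarrow> (nat \<Rightarrow> 'L) \<Rightarrow> 'L"
  assumes dv: "discrete_valued v OL \<pi>" and n1: "n \<ge> 1" and sym: "symplectic n B"
begin

lemma vmul: "x \<noteq> 0 \<Longrightarrow> y \<noteq> 0 \<Longrightarrow> v (x * y) = v x + v y"
  using dv unfolding discrete_valued_def by blast
lemma vadd_min: "x \<noteq> 0 \<Longrightarrow> y \<noteq> 0 \<Longrightarrow> x + y \<noteq> 0 \<Longrightarrow> min (v x) (v y) \<le> v (x + y)"
  using dv unfolding discrete_valued_def by blast
lemma pi_nz: "\<pi> \<noteq> 0" using dv unfolding discrete_valued_def by blast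
lemma v_pi: "v \<pi> = 1" using dv unfolding discrete_valued_def by blast
lemma OL_iff: "x \<in> OL \<longleftrightarrow> x = 0 \<or> 0 \<le> v x"
  using dv unfolding discrete_valued_def by blast

lemma v_one: "v 1 = 0" using vmul[of 1 1] by simp
lemma v_m1: "v (-1) = 0" using vmul[of "-1" "-1"] v_one by simp
lemma v_uminus: "x \<noteq> 0 \<Longrightarrow> v (-x) = v x"
  using vmul[of "-1" x] v_m1 by simp
lemma v_inverse: "x \<noteq> 0 \<Longrightarrow> v (inverse x) = - v x"
  using vmul[of x "inverse x"] v_one by simp
lemma v_pow: "v (\<pi> ^ t) = int t"
  by (induction t) (auto simp: v_one vmul pi_nz v_pi)

lemma OL_0[simp]: "0 \<in> OL" by (simp add: OL_iff)
lemma OL_1[simp]: "1 \<in> OL" by (simp add: OL_iff v_one)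
lemma OL_pi[simp]: "\<pi> \<in> OL" by (simp add: OL_iff v_pi)
lemma OL_mult[simp]: "x \<in> OL \<Longrightarrow> y \<in> OL \<Longrightarrow> x * y \<in> OL"
  by (cases "x = 0 \<or> y = 0") (auto simp: OL_iff vmul)
lemma OL_uminus[simp]: "x \<in> OL \<Longrightarrow> - x \<in> OL"
  by (cases "x = 0") (auto simp: OL_iff v_uminus)
lemma OL_add[simp]: "x \<in> OL \<Longrightarrow> y \<in> OL \<Longrightarrow> x + y \<in> OL"
proof -
  assume a: "x \<in> OL" "y \<in> OL"
  show ?thesis
  proof (cases "x = 0 \<or> y = 0 \<or> x + y = 0")
    case True then show ?thesis using a by auto
  next
    case False
    then have "min (v x) (v y) \<le> v (x + y)" using vadd_min by blast
    then show ?thesis using a False by (auto simp: OL_iff)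
  qed
qed
lemma OL_diff[simp]: "x \<in> OL \<Longrightarrow> y \<in> OL \<Longrightarrow> x - y \<in> OL"
  using OL_add[of x "-y"] by simp
lemma OL_pow[simp]: "\<pi> ^ t \<in> OL" by (induction t) auto
lemma OL_sum: "(\<And>i. i \<in> S \<Longrightarrow> f i \<in> OL) \<Longrightarrow> sum f S \<in> OL"
  by (induction S rule: infinite_finite_induct) auto

lemma OL_div_key:
  assumes "\<pi> ^ (Suc t) * c \<in> OL" "\<pi> ^ t * c' \<notin> OL"
  shows "c / c' \<in> OL"
proof (cases "c = 0")
  case True then show ?thesis by simp
next
  case False
  have c': "c' \<noteq> 0" using assms(2) by auto
  have "v (\<pi> ^ t * c') < 0" using assms(2) by (auto simp: OL_iff)
  then have 1: "int t + v c' < 0" using vmul[of "\<pi>^t" c'] c' pi_nz v_pow by simp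
  have "0 \<le> v (\<pi> ^ Suc t * c)" using assms(1) False pi_nz by (auto simp: OL_iff)
  moreover have "v (\<pi>^Suc t * c) = v (\<pi>^Suc t) + v c" using vmul[of "\<pi>^Suc t" c] False pi_nz by simp
  moreover have "v (\<pi>^Suc t) = int (Suc t)" by (rule v_pow)
  ultimately have 2: "0 \<le> int (Suc t) + v c" by linarith
  have "v (c / c') = v c - v c'"
    using vmul[of c "inverse c'"] v_inverse[of c'] False c' by (simp add: divide_inverse)
  then show ?thesis using 1 2 by (simp add: OL_iff)
qed

abbreviation zv :: "nat \<Rightarrow> 'L" where "zv \<equiv> (\<lambda>_. 0)"

lemma vecs_iff: "x \<in> vecs n \<longleftrightarrow> (\<forall>j\<ge>2*n. x j = 0)" by (simp add: vecs_def)
lemma vecs_zero[simp]: "zv \<in> vecs n" by (simp add: vecs_def)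
lemma vecs_vadd[simp]: "x \<in> vecs n \<Longrightarrow> y \<in> vecs n \<Longrightarrow> vadd x y \<in> vecs n"
  by (simp add: vecs_def vadd_def)
lemma vecs_vsc[simp]: "x \<in> vecs n \<Longrightarrow> vsc c x \<in> vecs n"
  by (simp add: vecs_def vsc_def)
lemma vecs_lincomb[simp]: "(\<And>i. i < 2*n \<Longrightarrow> b i \<in> vecs n) \<Longrightarrow> lincomb n a b \<in> vecs n"
  by (simp add: vecs_def lincomb_def)
lemma vecs_sum: "finite S \<Longrightarrow> (\<And>i. i \<in> S \<Longrightarrow> f i \<in> vecs n) \<Longrightarrow> (\<lambda>j. \<Sum>i\<in>S. f i j) \<in> vecs n"
  by (simp add: vecs_def)

lemma vsc_vsc[simp]: "vsc a (vsc b x) = vsc (a * b) x" by (simp add: vsc_def mult.assoc)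
lemma vsc_one[simp]: "vsc 1 x = x" by (simp add: vsc_def)
lemma vsc_zero[simp]: "vsc 0 x = zv" by (simp add: vsc_def)
lemma vsc_zv[simp]: "vsc c zv = zv" by (simp add: vsc_def)
lemma vadd_zv[simp]: "vadd x zv = x" "vadd zv x = x" by (simp_all add: vadd_def)
lemma vsc_vadd: "vsc c (vadd x y) = vadd (vsc c x) (vsc c y)"
  by (simp add: vsc_def vadd_def algebra_simps)
lemma vadd_comm: "vadd x y = vadd y x" by (simp add: vadd_def add.commute)
lemma vadd_assoc: "vadd (vadd x y) z = vadd x (vadd y z)" by (simp add: vadd_def add.assoc)
lemma vadd_neg: "vadd x (vsc (-1) x) = zv" by (simp add: vadd_def vsc_def)
lemma vsc_add: "vsc (a + b) x = vadd (vsc a x) (vsc b x)" by (simp add: vadd_def vsc_def algebra_simps)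
lemma vsc_inj: "c \<noteq> 0 \<Longrightarrow> vsc c x = vsc c y \<Longrightarrow> x = y"
  by (auto simp: vsc_def fun_eq_iff)
lemma vadd_cancel: "vadd x y = z \<longleftrightarrow> x = vadd z (vsc (-1) y)"
  by (auto simp: vadd_def vsc_def fun_eq_iff algebra_simps)

lemma lincomb_add: "lincomb n (\<lambda>i. a i + c i) b = vadd (lincomb n a b) (lincomb n c b)"
  by (simp add: lincomb_def vadd_def algebra_simps sum.distrib)
lemma lincomb_sc: "lincomb n (\<lambda>i. s * a i) b = vsc s (lincomb n a b)"
  by (simp add: lincomb_def vsc_def sum_distrib_left mult.assoc)
lemma lincomb_sc_vec: "lincomb n a (\<lambda>i. vsc s (b i)) = vsc s (lincomb n a b)"
  by (simp add: lincomb_def vsc_def sum_distrib_left algebra_simps)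
lemma lincomb_cong: "(\<And>i. i < 2*n \<Longrightarrow> a i = c i) \<Longrightarrow> lincomb n a b = lincomb n c b"
  by (simp add: lincomb_def)
lemma lincomb_zero[simp]: "lincomb n (\<lambda>_. 0) b = zv" by (simp add: lincomb_def)
lemma lincomb_delta: assumes "r < 2*n" shows "lincomb n (\<lambda>i. if i = r then 1 else 0) b = b r"
proof -
  have "\<And>j. (\<Sum>i<2*n. (if i = r then 1 else 0) * b i j) = (\<Sum>i<2*n. if i = r then b r j else 0)"
    by (rule sum.cong) auto
  then show ?thesis using assms by (simp add: lincomb_def fun_eq_iff)
qed
lemma lincomb_diff: "lincomb n (\<lambda>i. a i - c i) b = vadd (lincomb n a b) (vsc (-1) (lincomb n c b))"
  using lincomb_add[of a "\<lambda>i. - c i" b] lincomb_sc[of "-1" c b] by simp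

lemma B_add_l: "x \<in> vecs n \<Longrightarrow> y \<in> vecs n \<Longrightarrow> z \<in> vecs n \<Longrightarrow> B (vadd x y) z = B x z + B y z"
  using sym unfolding symplectic_def by blast
lemma B_add_r: "x \<in> vecs n \<Longrightarrow> y \<in> vecs n \<Longrightarrow> z \<in> vecs n \<Longrightarrow> B z (vadd x y) = B z x + B z y"
  using sym unfolding symplectic_def by blast
lemma B_sc_l: "x \<in> vecs n \<Longrightarrow> z \<in> vecs n \<Longrightarrow> B (vsc c x) z = c * B x z"
  using sym unfolding symplectic_def by blast
lemma B_sc_r: "x \<in> vecs n \<Longrightarrow> z \<in> vecs n \<Longrightarrow> B z (vsc c x) = c * B z x"
  using sym unfolding symplectic_def by blast
lemma B_alt: "x \<in> vecs n \<Longrightarrow> B x x = 0"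
  using sym unfolding symplectic_def by blast
lemma B_nondeg: "x \<in> vecs n \<Longrightarrow> (\<And>y. y \<in> vecs n \<Longrightarrow> B x y = 0) \<Longrightarrow> x = zv"
  using sym unfolding symplectic_def by blast

lemma B_zero_l[simp]: "z \<in> vecs n \<Longrightarrow> B zv z = 0"
  using B_sc_l[of zv z 0] by simp
lemma B_zero_r[simp]: "z \<in> vecs n \<Longrightarrow> B z zv = 0"
  using B_sc_r[of zv z 0] by simp

lemma B_antisym: assumes "x \<in> vecs n" "y \<in> vecs n" shows "B x y = - B y x"
proof -
  have "0 = B (vadd x y) (vadd x y)" using B_alt assms by simp
  also have "\<dots> = B x x + B x y + (B y x + B y y)"
    using assms by (simp add: B_add_l B_add_r)
  finally show ?thesis using B_alt assms by (simp add: eq_neg_iff_add_eq_0)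
qed

lemma B_sum_l:
  assumes "finite S" "\<And>i. i \<in> S \<Longrightarrow> f i \<in> vecs n" "z \<in> vecs n"
  shows "B (\<lambda>j. \<Sum>i\<in>S. f i j) z = (\<Sum>i\<in>S. B (f i) z)"
  using assms
proof (induction S rule: finite_induct)
  case empty then show ?case by simp
next
  case (insert a S)
  have "(\<lambda>j. \<Sum>i\<in>insert a S. f i j) = vadd (f a) (\<lambda>j. \<Sum>i\<in>S. f i j)"
    using insert by (simp add: vadd_def)
  then show ?case using insert by (simp add: B_add_l vecs_sum)
qed

lemma B_sum_r:
  assumes "finite S" "\<And>i. i \<in> S \<Longrightarrow> f i \<in> vecs n" "z \<in> vecs n"
  shows "B z (\<lambda>j. \<Sum>i\<in>S. f i j) = (\<Sum>i\<in>S. B z (f i))"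
  using assms
proof (induction S rule: finite_induct)
  case empty then show ?case by simp
next
  case (insert a S)
  have "(\<lambda>j. \<Sum>i\<in>insert a S. f i j) = vadd (f a) (\<lambda>j. \<Sum>i\<in>S. f i j)"
    using insert by (simp add: vadd_def)
  then show ?case using insert by (simp add: B_add_r vecs_sum)
qed

lemma lincomb_as_sum: "lincomb n a b = (\<lambda>j. \<Sum>i<2*n. vsc (a i) (b i) j)"
  by (simp add: lincomb_def vsc_def)

lemma B_lincomb_l:
  assumes "\<And>i. i < 2*n \<Longrightarrow> b i \<in> vecs n" "z \<in> vecs n"
  shows "B (lincomb n a b) z = (\<Sum>i<2*n. a i * B (b i) z)"
  unfolding lincomb_as_sum using assms by (subst B_sum_l) (auto simp: B_sc_l)

lemma B_lincomb_r:
  assumes "\<And>i. i < 2*n \<Longrightarrow> b i \<in> vecs n" "z \<in> vecs n"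
  shows "B z (lincomb n a b) = (\<Sum>i<2*n. a i * B z (b i))"
  unfolding lincomb_as_sum using assms by (subst B_sum_r) (auto simp: B_sc_r)

end

context setting begin

definition basis :: "(nat \<Rightarrow> nat \<Rightarrow> 'L) \<Rightarrow> bool" where
  "basis b \<longleftrightarrow> (\<forall>i<2*n. b i \<in> vecs n) \<and> (\<forall>c. lincomb n c b = zv \<longrightarrow> (\<forall>i<2*n. c i = 0)) \<and>
     (\<forall>x\<in>vecs n. \<exists>c. x = lincomb n c b)"
definition span :: "(nat \<Rightarrow> nat \<Rightarrow> 'L) \<Rightarrow> (nat \<Rightarrow> 'L) set" where
  "span b = {lincomb n a b | a. \<forall>i. a i \<in> OL}"
definition coord :: "(nat \<Rightarrow> nat \<Rightarrow> 'L) \<Rightarrow> (nat \<Rightarrow> 'L) \<Rightarrow> nat \<Rightarrow> 'L" where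
  "coord b x = (SOME c. x = lincomb n c b)"

lemma lattice_iff: "Defs.lattice n OL M \<longleftrightarrow> (\<exists>b. basis b \<and> M = span b)"
  unfolding Defs.lattice_def basis_def span_def by (simp only: conj_assoc)

lemma basis_vecs: "basis b \<Longrightarrow> i < 2*n \<Longrightarrow> b i \<in> vecs n"
  unfolding basis_def by blast

lemma basis_coeffs:
  assumes "basis b" "lincomb n c b = lincomb n c' b" "i < 2*n" shows "c i = c' i"
proof -
  have "lincomb n (\<lambda>i. c i - c' i) b = zv"
    using assms(2) by (simp add: lincomb_diff vadd_neg)
  then show ?thesis using assms(1,3) unfolding basis_def by auto
qed

lemma coord_eq: assumes "basis b" "x \<in> vecs n" shows "lincomb n (coord b x) b = x"
proof -
  obtain c where "x = lincomb n c b" using assms unfolding basis_def by blast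
  then show ?thesis unfolding coord_def by (metis (mono_tags, lifting) someI_ex)
qed

lemma coord_lincomb: assumes "basis b" "i < 2*n" shows "coord b (lincomb n c b) i = c i"
  using coord_eq[OF assms(1), of "lincomb n c b"] basis_coeffs[OF assms(1) _ assms(2)]
    basis_vecs[OF assms(1)] by simp

lemma vecs_eq_coord:
  assumes "basis b" "x \<in> vecs n" "y \<in> vecs n" "\<And>i. i < 2*n \<Longrightarrow> coord b x i = coord b y i"
  shows "x = y"
  using coord_eq[OF assms(1,2)] coord_eq[OF assms(1,3)] lincomb_cong[of "coord b x" "coord b y" b] assms(4)
  by metis

lemma coord_vadd:
  assumes "basis b" "x \<in> vecs n" "y \<in> vecs n" "i < 2*n"
  shows "coord b (vadd x y) i = coord b x i + coord b y i"
proof -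
  have "vadd x y = lincomb n (\<lambda>i. coord b x i + coord b y i) b"
    using coord_eq[OF assms(1,2)] coord_eq[OF assms(1,3)] by (simp add: lincomb_add)
  then show ?thesis using coord_lincomb[OF assms(1,4)] by simp
qed

lemma coord_vsc:
  assumes "basis b" "x \<in> vecs n" "i < 2*n"
  shows "coord b (vsc c x) i = c * coord b x i"
proof -
  have "vsc c x = lincomb n (\<lambda>i. c * coord b x i) b"
    using coord_eq[OF assms(1,2)] by (simp add: lincomb_sc)
  then show ?thesis using coord_lincomb[OF assms(1,3)] by simp
qed

lemma coord_basis:
  assumes "basis b" "r < 2*n" "i < 2*n" shows "coord b (b r) i = (if i = r then 1 else 0)"
  using coord_lincomb[OF assms(1,3), of "\<lambda>i. if i = r then 1 else 0"] lincomb_delta[OF assms(2), of b] by simp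

lemma coord_zero:
  assumes "basis b" "i < 2*n" shows "coord b zv i = 0"
  using coord_lincomb[OF assms, of "\<lambda>_. 0"] by simp

lemma span_iff:
  assumes "basis b"
  shows "x \<in> span b \<longleftrightarrow> x \<in> vecs n \<and> (\<forall>i<2*n. coord b x i \<in> OL)"
proof
  assume "x \<in> span b"
  then obtain a where a: "x = lincomb n a b" "\<forall>i. a i \<in> OL" unfolding span_def by blast
  then show "x \<in> vecs n \<and> (\<forall>i<2*n. coord b x i \<in> OL)"
    using coord_lincomb[OF assms] basis_vecs[OF assms] by simp
next
  assume x: "x \<in> vecs n \<and> (\<forall>i<2*n. coord b x i \<in> OL)"
  define a where "a = (\<lambda>i. if i < 2*n then coord b x i else 0)"
  have "lincomb n a b = lincomb n (coord b x) b" by (rule lincomb_cong) (simp add: a_def)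
  then have "x = lincomb n a b" using coord_eq[OF assms] x by simp
  moreover have "\<forall>i. a i \<in> OL" using x by (simp add: a_def)
  ultimately show "x \<in> span b" unfolding span_def by blast
qed

lemma span_vecs: "basis b \<Longrightarrow> x \<in> span b \<Longrightarrow> x \<in> vecs n"
  using span_iff by blast

lemma basis_in_span: assumes "basis b" "r < 2*n" shows "b r \<in> span b"
  using assms by (simp add: span_iff basis_vecs coord_basis)

lemma omodule_span: assumes b: "basis b" shows "omodule OL (span b)"
  unfolding omodule_def
proof (intro conjI ballI)
  show "zv \<in> span b" using coord_zero[OF b] by (simp add: span_iff[OF b])
next
  fix x y assume x: "x \<in> span b" and y: "y \<in> span b"
  then have "x \<in> vecs n" "y \<in> vecs n" "\<forall>i<2*n. coord b x i \<in> OL" "\<forall>i<2*n. coord b y i \<in> OL"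
    by (simp_all add: span_iff[OF b])
  then show "vadd x y \<in> span b" by (simp add: span_iff[OF b] coord_vadd[OF b])
next
  fix a x assume a: "a \<in> OL" and x: "x \<in> span b"
  then have "x \<in> vecs n" "\<forall>i<2*n. coord b x i \<in> OL" by (simp_all add: span_iff[OF b])
  then show "vsc a x \<in> span b" using a by (simp add: span_iff[OF b] coord_vsc[OF b])
qed

lemma lattice_vecs: "Defs.lattice n OL M \<Longrightarrow> M \<subseteq> vecs n"
proof -
  assume "Defs.lattice n OL M"
  then obtain b where "basis b" "M = span b" unfolding lattice_iff by blast
  then show ?thesis using span_vecs by blast
qed

lemma lattice_omodule: "Defs.lattice n OL M \<Longrightarrow> omodule OL M"
proof -
  assume "Defs.lattice n OL M"
  then obtain b where "basis b" "M = span b" unfolding lattice_iff by blast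
  then show ?thesis using omodule_span by simp
qed

lemma basis_scale: assumes "basis b" "c \<noteq> 0" shows "basis (\<lambda>i. vsc c (b i))"
  unfolding basis_def
proof (intro conjI allI impI ballI)
  fix i assume "i < 2*n" then show "vsc c (b i) \<in> vecs n" using basis_vecs[OF assms(1)] by simp
next
  fix a i assume "lincomb n a (\<lambda>i. vsc c (b i)) = zv" "i < 2*n"
  then have "vsc c (lincomb n a b) = vsc c zv" by (simp add: lincomb_sc_vec)
  then have "lincomb n a b = zv" using vsc_inj[OF assms(2)] by blast
  then show "a i = 0" using assms(1) \<open>i < 2*n\<close> unfolding basis_def by blast
next
  fix x :: "nat \<Rightarrow> 'L" assume "x \<in> vecs n"
  then have "vsc (inverse c) x \<in> vecs n" by simp
  then obtain a where a: "vsc (inverse c) x = lincomb n a b" using assms(1) unfolding basis_def by blast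
  have "x = vsc c (vsc (inverse c) x)" using assms(2) by simp
  then have "x = vsc c (lincomb n a b)" using a by simp
  then show "\<exists>a. x = lincomb n a (\<lambda>i. vsc c (b i))" by (auto simp: lincomb_sc_vec)
qed

lemma span_scale: "span (\<lambda>i. vsc c (b i)) = vsc c ` span b"
proof -
  have "span (\<lambda>i. vsc c (b i)) = {vsc c (lincomb n a b) | a. \<forall>i. a i \<in> OL}"
    unfolding span_def by (simp add: lincomb_sc_vec)
  also have "\<dots> = vsc c ` span b" unfolding span_def by blast
  finally show ?thesis .
qed

lemma lattice_scale: assumes "Defs.lattice n OL M" "c \<noteq> 0" shows "Defs.lattice n OL (vsc c ` M)"
proof -
  obtain b where b: "basis b" "M = span b" using assms(1) unfolding lattice_iff by blast
  have "basis (\<lambda>i. vsc c (b i))" by (rule basis_scale[OF b(1) assms(2)])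
  moreover have "vsc c ` M = span (\<lambda>i. vsc c (b i))" using b(2) span_scale by simp
  ultimately show ?thesis unfolding lattice_iff by blast
qed

abbreviation dual :: "(nat \<Rightarrow> 'L) set \<Rightarrow> (nat \<Rightarrow> 'L) set" where
  "dual \<Lambda> \<equiv> dual_lattice n OL B \<Lambda>"

lemma dual_iff: "x \<in> dual \<Lambda> \<longleftrightarrow> x \<in> vecs n \<and> (\<forall>y\<in>\<Lambda>. B x y \<in> OL)"
  unfolding dual_lattice_def by blast

lemma dual_anti: "\<Lambda> \<subseteq> \<Lambda>' \<Longrightarrow> dual \<Lambda>' \<subseteq> dual \<Lambda>"
  unfolding dual_lattice_def by blast

lemma dual_basis_exists:
  assumes "basis b"
  shows "\<exists>b'. basis b' \<and> (\<forall>r<2*n. \<forall>j<2*n. B (b' r) (b j) = (if r = j then 1 else 0))"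
proof -
  note bv = basis_vecs[OF assms]
  define g where "g = (\<lambda>i j. B (b i) (b j))"
  have "\<exists>h. \<forall>r<2*n. \<forall>j<2*n. (\<Sum>i<2*n. h r i * g i j) = (if r = j then 1 else 0)"
  proof (rule gram_inverse)
    fix c assume c: "\<forall>j<2*n. (\<Sum>i<2*n. c i * g i j) = 0"
    define x where "x = lincomb n c b"
    have xv: "x \<in> vecs n" unfolding x_def using bv by simp
    have "x = zv"
    proof (rule B_nondeg[OF xv])
      fix y :: "nat \<Rightarrow> 'L" assume y: "y \<in> vecs n"
      then obtain a where a: "y = lincomb n a b" using assms unfolding basis_def by blast
      have "\<And>j. j < 2*n \<Longrightarrow> B x (b j) = 0"
        unfolding x_def using c bv by (simp add: B_lincomb_l g_def)
      then show "B x y = 0" unfolding a using bv xv by (simp add: B_lincomb_r)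
    qed
    then show "\<forall>i<2*n. c i = 0" using assms unfolding basis_def x_def by blast
  qed
  then obtain h where h: "\<forall>r<2*n. \<forall>j<2*n. (\<Sum>i<2*n. h r i * g i j) = (if r = j then 1 else 0)" by blast
  define b' where "b' = (\<lambda>r. lincomb n (h r) b)"
  have b'v: "\<And>r. b' r \<in> vecs n" unfolding b'_def using bv by simp
  have key: "\<forall>r<2*n. \<forall>j<2*n. B (b' r) (b j) = (if r = j then 1 else 0)"
    using h bv unfolding b'_def g_def by (simp add: B_lincomb_l)
  have "basis b'"
    unfolding basis_def
  proof (intro conjI allI impI ballI)
    fix i show "b' i \<in> vecs n" by (rule b'v)
  next
    fix c :: "nat \<Rightarrow> 'L" and i assume c: "lincomb n c b' = zv" and i: "i < 2*n"
    have "B (lincomb n c b') (b i) = (\<Sum>r<2*n. c r * B (b' r) (b i))"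
      using b'v bv i by (simp add: B_lincomb_l)
    also have "\<dots> = (\<Sum>r<2*n. if r = i then c i else 0)"
      by (rule sum.cong) (auto simp: key i)
    also have "\<dots> = c i" using i by simp
    finally show "c i = 0" using c bv i by simp
  next
    fix x :: "nat \<Rightarrow> 'L" assume x: "x \<in> vecs n"
    define c where "c = (\<lambda>r. B x (b r))"
    define y where "y = vadd x (vsc (-1) (lincomb n c b'))"
    have yv: "y \<in> vecs n" unfolding y_def using x b'v by simp
    have "y = zv"
    proof (rule B_nondeg[OF yv])
      fix z :: "nat \<Rightarrow> 'L" assume z: "z \<in> vecs n"
      then obtain a where a: "z = lincomb n a b" using assms unfolding basis_def by blast
      have "\<And>j. j < 2*n \<Longrightarrow> B y (b j) = 0"
      proof -
        fix j assume j: "j < 2*n"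
        have "B (lincomb n c b') (b j) = (\<Sum>r<2*n. c r * B (b' r) (b j))"
          using b'v bv j by (simp add: B_lincomb_l)
        also have "\<dots> = (\<Sum>r<2*n. if r = j then c j else 0)"
          by (rule sum.cong) (auto simp: key j)
        also have "\<dots> = c j" using j by simp
        finally have "B (lincomb n c b') (b j) = c j" .
        then show "B y (b j) = 0" unfolding y_def using x b'v bv j
          by (simp add: B_add_l B_sc_l c_def)
      qed
      then show "B y z = 0" unfolding a using bv yv by (simp add: B_lincomb_r)
    qed
    then have "x = lincomb n c b'" unfolding y_def by (simp add: vadd_cancel)
    then show "\<exists>c. x = lincomb n c b'" by blast
  qed
  with key show ?thesis by blast
qed

lemma dual_span:
  assumes b: "basis b" and b': "basis b'" and e: "e \<in> OL" "inverse e \<in> OL" "e \<noteq> 0"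
    and key: "\<forall>r<2*n. \<forall>j<2*n. B (b' r) (b j) = (if r = j then e else 0)"
  shows "dual (span b) = span b'"
proof (intro Set.set_eqI iffI)
  note bv = basis_vecs[OF b] and b'v = basis_vecs[OF b']
  have Bx: "B x (b j) = coord b' x j * e" if x: "x \<in> vecs n" and j: "j < 2*n" for x j
  proof -
    have "B x (b j) = B (lincomb n (coord b' x) b') (b j)" using coord_eq[OF b' x] by simp
    also have "\<dots> = (\<Sum>r<2*n. coord b' x r * B (b' r) (b j))"
      using b'v bv j by (simp add: B_lincomb_l)
    also have "\<dots> = (\<Sum>r<2*n. if r = j then coord b' x j * e else 0)"
      by (rule sum.cong) (auto simp: key j)
    finally show ?thesis using j by simp
  qed
  fix x
  {
    assume "x \<in> dual (span b)"
    then have x: "x \<in> vecs n" "\<forall>y\<in>span b. B x y \<in> OL" by (auto simp: dual_iff)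
    have "\<forall>i<2*n. coord b' x i \<in> OL"
    proof (intro allI impI)
      fix i assume i: "i < 2*n"
      have "coord b' x i * e \<in> OL" using x(2) basis_in_span[OF b i] Bx[OF x(1) i] by metis
      then have "coord b' x i * e * inverse e \<in> OL" using e by simp
      then show "coord b' x i \<in> OL" using e(3) by (simp add: mult.assoc)
    qed
    then show "x \<in> span b'" using x(1) by (simp add: span_iff[OF b'])
  }
  {
    assume "x \<in> span b'"
    then have x: "x \<in> vecs n" "\<forall>i<2*n. coord b' x i \<in> OL" by (auto simp: span_iff[OF b'])
    have "\<forall>y\<in>span b. B x y \<in> OL"
    proof
      fix y assume "y \<in> span b"
      then obtain a where a: "y = lincomb n a b" "\<forall>i. a i \<in> OL" unfolding span_def by blast
      have "B x y = (\<Sum>j<2*n. a j * (coord b' x j * e))"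
        unfolding a using bv x by (simp add: B_lincomb_r Bx)
      also have "\<dots> \<in> OL" using a x e by (intro OL_sum) auto
      finally show "B x y \<in> OL" .
    qed
    then show "x \<in> dual (span b)" using x by (simp add: dual_iff)
  }
qed

lemma dual_lattice_props:
  assumes "Defs.lattice n OL M" shows "Defs.lattice n OL (dual M)" "dual (dual M) = M"
proof -
  obtain b where b: "basis b" "M = span b" using assms lattice_iff by blast
  obtain b' where b': "basis b'" "\<forall>r<2*n. \<forall>j<2*n. B (b' r) (b j) = (if r = j then 1 else 0)"
    using dual_basis_exists[OF b(1)] by blast
  have d1: "dual M = span b'" using dual_span[OF b(1) b'(1), of 1] b' b(2) by simp
  then show "Defs.lattice n OL (dual M)" using b'(1) lattice_iff by blast
  have "\<forall>r<2*n. \<forall>j<2*n. B (b r) (b' j) = (if r = j then -1 else 0)"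
  proof (intro allI impI)
    fix r j assume r: "r < 2*n" and j: "j < 2*n"
    have "B (b r) (b' j) = - B (b' j) (b r)"
      using B_antisym basis_vecs[OF b(1) r] basis_vecs[OF b'(1) j] by blast
    then show "B (b r) (b' j) = (if r = j then -1 else 0)" using b'(2) r j by auto
  qed
  then have "dual (span b') = span b" using dual_span[OF b'(1) b(1), of "-1"] by simp
  then show "dual (dual M) = M" using d1 b(2) by simp
qed

lemma dual_scale:
  assumes "\<Lambda> \<subseteq> vecs n" "c \<noteq> 0"
  shows "dual (vsc c ` \<Lambda>) = vsc (inverse c) ` dual \<Lambda>"
proof (intro Set.set_eqI iffI)
  fix x assume x: "x \<in> dual (vsc c ` \<Lambda>)"
  have "vsc c x \<in> dual \<Lambda>" using x assms by (auto simp: dual_iff B_sc_l B_sc_r subsetD)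
  then have "vsc (inverse c) (vsc c x) \<in> vsc (inverse c) ` dual \<Lambda>" by blast
  then show "x \<in> vsc (inverse c) ` dual \<Lambda>" using assms(2) by simp
next
  fix x assume "x \<in> vsc (inverse c) ` dual \<Lambda>"
  then obtain y where y: "x = vsc (inverse c) y" "y \<in> dual \<Lambda>" by blast
  have "\<forall>z\<in>\<Lambda>. B x (vsc c z) \<in> OL"
  proof
    fix z assume z: "z \<in> \<Lambda>"
    have "B x (vsc c z) = B y z" using y z assms by (auto simp: dual_iff B_sc_l B_sc_r subsetD)
    then show "B x (vsc c z) \<in> OL" using y z by (simp add: dual_iff)
  qed
  then show "x \<in> dual (vsc c ` \<Lambda>)" using y by (auto simp: dual_iff)
qed

end

lemma finite_ex_mono:
  assumes fin: "finite S" and ex: "\<And>s. s \<in> S \<Longrightarrow> \<exists>N::nat. P N s"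
    and mono: "\<And>N N' s. P N s \<Longrightarrow> N \<le> N' \<Longrightarrow> P N' s"
  shows "\<exists>N. \<forall>s\<in>S. P N s"
  using fin ex
proof (induction S rule: finite_induct)
  case empty then show ?case by simp
next
  case (insert a S)
  then obtain N where N: "\<forall>s\<in>S. P N s" by blast
  obtain N' where N': "P N' a" using insert by blast
  have "\<forall>s\<in>insert a S. P (max N N') s"
  proof
    fix s assume "s \<in> insert a S"
    then show "P (max N N') s"
    proof
      assume "s = a" then show ?thesis using mono[OF N', of "max N N'"] by simp
    next
      assume "s \<in> S" then show ?thesis using mono[of N s "max N N'"] N by simp
    qed
  qed
  then show ?case by blast
qed

context setting begin

lemma coord_sum:
  assumes b: "basis b" and "finite S" "\<And>r. r \<in> S \<Longrightarrow> g r \<in> vecs n" "i < 2*n"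
  shows "coord b (\<lambda>j. \<Sum>r\<in>S. g r j) i = (\<Sum>r\<in>S. coord b (g r) i)"
  using assms(2-)
proof (induction S rule: finite_induct)
  case empty then show ?case using coord_zero[OF b] by simp
next
  case (insert a S)
  have "(\<lambda>j. \<Sum>r\<in>insert a S. g r j) = vadd (g a) (\<lambda>j. \<Sum>r\<in>S. g r j)"
    using insert by (simp add: vadd_def)
  then show ?case using insert by (simp add: coord_vadd[OF b] vecs_sum)
qed

lemma coord_lincomb_gen:
  assumes e: "basis e" and f: "basis f" and i: "i < 2*n"
  shows "coord e (lincomb n a f) i = (\<Sum>r<2*n. a r * coord e (f r) i)"
  unfolding lincomb_as_sum using basis_vecs[OF f] i
  by (subst coord_sum[OF e]) (auto simp: coord_vsc[OF e])

lemma pow_OL_exists: "\<exists>N. \<pi> ^ N * c \<in> OL"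
proof (cases "c = 0")
  case True then show ?thesis by simp
next
  case False
  have "v (\<pi> ^ nat (- v c) * c) = int (nat (- v c)) + v c"
    using vmul[of "\<pi> ^ nat (- v c)" c] False pi_nz v_pow by simp
  then have "\<pi> ^ nat (- v c) * c \<in> OL" by (simp add: OL_iff)
  then show ?thesis by blast
qed

lemma pow_OL_mono: "\<pi> ^ N * c \<in> OL \<Longrightarrow> N \<le> N' \<Longrightarrow> \<pi> ^ N' * c \<in> OL"
proof -
  assume a: "\<pi> ^ N * c \<in> OL" "N \<le> N'"
  have "\<pi> ^ N' = \<pi> ^ (N' - N) * \<pi> ^ N"
    using a(2) by (simp add: power_add[symmetric])
  then have eq: "\<pi> ^ N' * c = \<pi> ^ (N' - N) * (\<pi> ^ N * c)" by (simp add: mult.assoc)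
  have "\<pi> ^ (N' - N) * (\<pi> ^ N * c) \<in> OL" using a(1) by (rule OL_mult[OF OL_pow])
  then show ?thesis unfolding eq .
qed

definition region :: "(nat \<Rightarrow> nat \<Rightarrow> 'L) \<Rightarrow> nat \<Rightarrow> (nat \<Rightarrow> 'L) set" where
  "region e N = {x \<in> vecs n. \<forall>i<2*n. \<pi> ^ N * coord e x i \<in> OL}"

lemma comparable:
  assumes e: "basis e" and C: "Defs.lattice n OL C"
  shows "\<exists>N. C \<subseteq> region e N"
proof -
  obtain f where f: "basis f" "C = span f" using C lattice_iff by blast
  have "\<exists>N. \<forall>s\<in>{..<2*n} \<times> {..<2*n}. \<pi> ^ N * coord e (f (fst s)) (snd s) \<in> OL"
  proof (rule finite_ex_mono)
    show "finite ({..<2*n} \<times> {..<2*n})" by simp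
    fix s show "\<exists>N. \<pi> ^ N * coord e (f (fst s)) (snd s) \<in> OL" by (rule pow_OL_exists)
  next
    fix N N' s assume "\<pi> ^ N * coord e (f (fst (s::nat\<times>nat))) (snd s) \<in> OL" "N \<le> N'"
    then show "\<pi> ^ N' * coord e (f (fst s)) (snd s) \<in> OL" by (rule pow_OL_mono)
  qed
  then obtain N where N: "\<And>r i. r < 2*n \<Longrightarrow> i < 2*n \<Longrightarrow> \<pi> ^ N * coord e (f r) i \<in> OL" by auto
  have "C \<subseteq> region e N"
  proof
    fix x assume "x \<in> C"
    then obtain a where a: "x = lincomb n a f" "\<forall>i. a i \<in> OL" using f unfolding span_def by blast
    have "\<forall>i<2*n. \<pi> ^ N * coord e x i \<in> OL"
    proof (intro allI impI)
      fix i assume i: "i < 2*n"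
      have "\<pi> ^ N * coord e x i = (\<Sum>r<2*n. a r * (\<pi> ^ N * coord e (f r) i))"
        unfolding a using coord_lincomb_gen[OF e f(1) i] by (simp add: sum_distrib_left algebra_simps)
      also have "\<dots> \<in> OL" using a N i by (intro OL_sum) auto
      finally show "\<pi> ^ N * coord e x i \<in> OL" .
    qed
    moreover have "x \<in> vecs n" using a basis_vecs[OF f(1)] by simp
    ultimately show "x \<in> region e N" unfolding region_def by blast
  qed
  then show ?thesis by blast
qed

lemma region_scale:
  assumes e: "basis e" and x: "x \<in> region e N" shows "vsc (\<pi> ^ N) x \<in> span e"
  using x unfolding region_def by (auto simp: span_iff[OF e] coord_vsc[OF e])

definition ochain :: "(nat \<Rightarrow> (nat \<Rightarrow> 'L) set) \<Rightarrow> nat \<Rightarrow> bool" where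
  "ochain C m \<longleftrightarrow> (\<forall>j<m. C j \<subset> C (Suc j)) \<and> (\<forall>j\<le>m. omodule OL (C j))"

lemma olength_ochain:
  "olength OL X Y = (GREATEST m. \<exists>C. C 0 = X \<and> C m = Y \<and> ochain C m)"
  unfolding olength_def ochain_def by simp

lemma ochain_mono:
  assumes "ochain C m" "i \<le> j" "j \<le> m" shows "C i \<subseteq> C j"
  using assms(2,3)
proof (induction j)
  case 0 then show ?case by simp
next
  case (Suc j)
  show ?case
  proof (cases "i = Suc j")
    case True then show ?thesis by simp
  next
    case False
    then have "C i \<subseteq> C j" using Suc by simp
    moreover have "C j \<subset> C (Suc j)" using assms(1) Suc.prems unfolding ochain_def by simp
    ultimately show ?thesis by blast
  qed
qed

lemma ochain_strict:
  assumes "ochain C m" "i < j" "j \<le> m" shows "C i \<subset> C j"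
proof -
  obtain j' where j: "j = Suc j'" using assms(2) by (cases j) auto
  have "C i \<subseteq> C j'" using ochain_mono[OF assms(1), of i j'] assms j by simp
  moreover have "C j' \<subset> C (Suc j')" using assms(1,3) j unfolding ochain_def by simp
  ultimately show ?thesis using j by blast
qed

definition Pset :: "(nat \<Rightarrow> nat \<Rightarrow> 'L) \<Rightarrow> nat \<Rightarrow> (nat \<Rightarrow> 'L) set \<Rightarrow> (nat \<times> nat) set" where
  "Pset e N D = {p \<in> {..<2*n} \<times> {..<N}. \<exists>x\<in>D. (\<forall>s. fst p < s \<and> s < 2*n \<longrightarrow> coord e x s = 0) \<and>
       \<pi> ^ snd p * coord e x (fst p) \<notin> OL}"

lemma Pset_mono: "D \<subseteq> D' \<Longrightarrow> Pset e N D \<subseteq> Pset e N D'"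
  unfolding Pset_def by blast

lemma Pset_finite: "finite (Pset e N D)"
  unfolding Pset_def by (rule finite_subset[of _ "{..<2*n} \<times> {..<N}"]) auto

lemma Pset_card: "card (Pset e N D) \<le> 2*n*N"
proof -
  have "card (Pset e N D) \<le> card ({..<2*n} \<times> {..<N})"
    unfolding Pset_def by (rule card_mono) auto
  then show ?thesis by (simp add: card_cartesian_product)
qed

lemma omod_zero: "omodule OL D \<Longrightarrow> zv \<in> D" unfolding omodule_def by blast
lemma omod_add: "omodule OL D \<Longrightarrow> x \<in> D \<Longrightarrow> y \<in> D \<Longrightarrow> vadd x y \<in> D" unfolding omodule_def by blast
lemma omod_sc: "omodule OL D \<Longrightarrow> a \<in> OL \<Longrightarrow> x \<in> D \<Longrightarrow> vsc a x \<in> D" unfolding omodule_def by blast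

lemma Pset_stable:
  assumes e: "basis e" and D: "omodule OL D" and D': "omodule OL D'"
    and sub: "D \<subseteq> D'" and lo: "span e \<subseteq> D" and hi: "D' \<subseteq> region e N"
    and P: "Pset e N D' \<subseteq> Pset e N D"
  shows "D' \<subseteq> D"
proof -
  have main: "\<forall>x\<in>D'. (\<forall>s. r \<le> s \<and> s < 2*n \<longrightarrow> coord e x s = 0) \<longrightarrow> x \<in> D" if "r \<le> 2*n" for r
    using that
  proof (induction r)
    case 0
    show ?case
    proof (intro ballI impI)
      fix x assume x: "x \<in> D'" "\<forall>s. 0 \<le> s \<and> s < 2*n \<longrightarrow> coord e x s = 0"
      have xv: "x \<in> vecs n" using x hi unfolding region_def by blast
      have "x = zv" by (rule vecs_eq_coord[OF e xv vecs_zero]) (use x coord_zero[OF e] in auto)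
      then show "x \<in> D" using omod_zero[OF D] by simp
    qed
  next
    case (Suc r)
    then have r: "r < 2*n" by simp
    show ?case
    proof (intro ballI impI)
      fix x assume x: "x \<in> D'" and xz: "\<forall>s. Suc r \<le> s \<and> s < 2*n \<longrightarrow> coord e x s = 0"
      have xv: "x \<in> vecs n" using x hi unfolding region_def by blast
      define c where "c = coord e x r"
      have er: "e r \<in> D" using lo basis_in_span[OF e r] by blast
      have erv: "e r \<in> vecs n" using basis_vecs[OF e r] .
      show "x \<in> D"
      proof (cases "c \<in> OL")
        case True
        define y where "y = vadd x (vsc (- c) (e r))"
        have yD': "y \<in> D'" unfolding y_def using True er sub x
          by (intro omod_add[OF D'] omod_sc[OF D']) auto
        have yv: "y \<in> vecs n" unfolding y_def using xv erv by simp
        have "\<forall>s. r \<le> s \<and> s < 2*n \<longrightarrow> coord e y s = 0"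
        proof (intro allI impI)
          fix s assume s: "r \<le> s \<and> s < 2*n"
          have "coord e y s = coord e x s + (- c) * (if s = r then 1 else 0)"
            unfolding y_def using s xv erv r by (simp add: coord_vadd[OF e] coord_vsc[OF e] coord_basis[OF e])
          then show "coord e y s = 0" using xz s c_def by (cases "s = r") auto
        qed
        then have yD: "y \<in> D" using Suc.IH r yD' by simp
        have "x = vadd y (vsc c (e r))" unfolding y_def by (simp add: vadd_def vsc_def fun_eq_iff)
        then show "x \<in> D" using yD er True by (simp add: omod_add[OF D] omod_sc[OF D])
      next
        case False
        have xN: "\<pi> ^ N * c \<in> OL" using x hi r unfolding region_def c_def by blast
        define t where "t = (LEAST t. \<pi> ^ Suc t * c \<in> OL)"
        have N0: "N \<noteq> 0" using xN False by (cases N) auto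
        then have ex: "\<pi> ^ Suc (N - 1) * c \<in> OL" using xN by simp
        then have t1: "\<pi> ^ Suc t * c \<in> OL" unfolding t_def by (rule LeastI)
        have tN: "t \<le> N - 1" unfolding t_def using ex by (rule Least_le)
        have t2: "\<pi> ^ t * c \<notin> OL"
        proof (cases t)
          case 0 then show ?thesis using False by simp
        next
          case (Suc t')
          then have "t' < t" by simp
          then have "\<pi> ^ Suc t' * c \<notin> OL" unfolding t_def by (rule not_less_Least)
          then show ?thesis using Suc by simp
        qed
        have xz': "\<forall>s. r < s \<and> s < 2*n \<longrightarrow> coord e x s = 0" using xz by (simp add: Suc_le_eq)
        have "t < N" using tN N0 by simp
        moreover have "\<exists>y\<in>D'. (\<forall>s. r < s \<and> s < 2*n \<longrightarrow> coord e y s = 0) \<and> \<pi> ^ t * coord e y r \<notin> OL"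
          using x xz' t2 c_def by blast
        ultimately have "(r, t) \<in> Pset e N D'" using r by (simp add: Pset_def)
        then have "(r, t) \<in> Pset e N D" using P by blast
        then obtain y where y: "y \<in> D" "\<forall>s. r < s \<and> s < 2*n \<longrightarrow> coord e y s = 0"
          "\<pi> ^ t * coord e y r \<notin> OL" unfolding Pset_def by auto
        have yv: "y \<in> vecs n" using y(1) sub hi unfolding region_def by blast
        define lam where "lam = c / coord e y r"
        have lam: "lam \<in> OL" unfolding lam_def by (rule OL_div_key[OF t1 y(3)])
        have cy: "coord e y r \<noteq> 0" using y(3) by auto
        define z where "z = vadd x (vsc (- lam) y)"
        have zD': "z \<in> D'" unfolding z_def using lam y(1) sub x
          by (intro omod_add[OF D'] omod_sc[OF D']) auto
        have "\<forall>s. r \<le> s \<and> s < 2*n \<longrightarrow> coord e z s = 0"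
        proof (intro allI impI)
          fix s assume s: "r \<le> s \<and> s < 2*n"
          have "coord e z s = coord e x s + (- lam) * coord e y s"
            unfolding z_def using s xv yv by (simp add: coord_vadd[OF e] coord_vsc[OF e])
          then show "coord e z s = 0"
          proof (cases "s = r")
            case True
            then show ?thesis using \<open>coord e z s = _\<close> cy unfolding lam_def c_def by simp
          next
            case False
            then show ?thesis using \<open>coord e z s = _\<close> xz y(2) s by auto
          qed
        qed
        then have zD: "z \<in> D" using Suc.IH r zD' by simp
        have "x = vadd z (vsc lam y)" unfolding z_def by (simp add: vadd_def vsc_def fun_eq_iff)
        then show "x \<in> D" using zD y(1) lam by (simp add: omod_add[OF D] omod_sc[OF D])
      qed
    qed
  qed
  show ?thesis
  proof
    fix x assume "x \<in> D'"
    then show "x \<in> D" using main[of "2*n"] by auto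
  qed
qed

lemma chain_bound_region:
  assumes e: "basis e" and ch: "ochain C m" and lo: "span e \<subseteq> C 0" and hi: "C m \<subseteq> region e N"
  shows "m \<le> 2*n*N"
proof -
  have "j \<le> card (Pset e N (C j))" if "j \<le> m" for j
    using that
  proof (induction j)
    case 0 then show ?case by simp
  next
    case (Suc j)
    have sub: "C j \<subset> C (Suc j)" using ch Suc.prems unfolding ochain_def by simp
    have om: "omodule OL (C j)" "omodule OL (C (Suc j))" using ch Suc.prems unfolding ochain_def by auto
    have lo': "span e \<subseteq> C j" using lo ochain_mono[OF ch, of 0 j] Suc.prems by auto
    have hi': "C (Suc j) \<subseteq> region e N" using hi ochain_mono[OF ch, of "Suc j" m] Suc.prems by auto
    have "Pset e N (C j) \<subset> Pset e N (C (Suc j))"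
    proof -
      have "Pset e N (C j) \<subseteq> Pset e N (C (Suc j))" using sub Pset_mono by blast
      moreover have "\<not> Pset e N (C (Suc j)) \<subseteq> Pset e N (C j)"
        using Pset_stable[OF e om(1) om(2) _ lo' hi'] sub by blast
      ultimately show ?thesis by blast
    qed
    then have "card (Pset e N (C j)) < card (Pset e N (C (Suc j)))"
      using Pset_finite by (rule psubset_card_mono[rotated])
    then show ?case using Suc by simp
  qed
  then have "m \<le> card (Pset e N (C m))" by simp
  then show ?thesis using Pset_card[of e N "C m"] by simp
qed

lemma chain_bound:
  assumes L1: "Defs.lattice n OL L1" and L2: "Defs.lattice n OL L2"
  shows "\<exists>K. \<forall>C m. ochain C m \<longrightarrow> L1 \<subseteq> C 0 \<longrightarrow> C m \<subseteq> L2 \<longrightarrow> m \<le> K"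
proof -
  obtain e where e: "basis e" "L1 = span e" using L1 lattice_iff by blast
  obtain N where N: "L2 \<subseteq> region e N" using comparable[OF e(1) L2] by blast
  show ?thesis using chain_bound_region[OF e(1)] e(2) N by blast
qed

end

context setting begin

definition inreg :: "(nat \<Rightarrow> 'L) set \<Rightarrow> (nat \<Rightarrow> 'L) set \<Rightarrow> bool" where
  "inreg X Y \<longleftrightarrow> (\<exists>L1 L2. Defs.lattice n OL L1 \<and> Defs.lattice n OL L2 \<and> L1 \<subseteq> X \<and> Y \<subseteq> L2)"

lemma inreg_bounded:
  assumes "inreg X Y" shows "\<exists>K. \<forall>C m. ochain C m \<longrightarrow> C 0 = X \<longrightarrow> C m = Y \<longrightarrow> m \<le> K"
proof -
  obtain L1 L2 where L: "Defs.lattice n OL L1" "Defs.lattice n OL L2" "L1 \<subseteq> X" "Y \<subseteq> L2"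
    using assms unfolding inreg_def by blast
  obtain K where K: "\<forall>C m. ochain C m \<longrightarrow> L1 \<subseteq> C 0 \<longrightarrow> C m \<subseteq> L2 \<longrightarrow> m \<le> K"
    using chain_bound[OF L(1,2)] by blast
  have "\<forall>C m. ochain C m \<longrightarrow> C 0 = X \<longrightarrow> C m = Y \<longrightarrow> m \<le> K"
  proof (intro allI impI)
    fix C m assume "ochain C m" "C 0 = X" "C m = Y"
    then show "m \<le> K" using K L(3,4) by simp
  qed
  then show ?thesis by (rule exI)
qed

lemma inreg_lat: "Defs.lattice n OL X \<Longrightarrow> Defs.lattice n OL Y \<Longrightarrow> inreg X Y"
  unfolding inreg_def by (intro exI conjI) (assumption | rule subset_refl)+

lemma olength_ge:
  assumes "inreg X Y" "ochain C m" "C 0 = X" "C m = Y"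
  shows "m \<le> olength OL X Y"
proof -
  obtain K where K: "\<forall>C m. ochain C m \<longrightarrow> C 0 = X \<longrightarrow> C m = Y \<longrightarrow> m \<le> K"
    using inreg_bounded[OF assms(1)] by blast
  have P: "\<exists>C'. C' 0 = X \<and> C' m = Y \<and> ochain C' m" using assms(2-4) by blast
  have bnd: "\<forall>y. (\<exists>C. C 0 = X \<and> C y = Y \<and> ochain C y) \<longrightarrow> y \<le> K" using K by blast
  show ?thesis unfolding olength_ochain by (rule Greatest_le_nat[where P="\<lambda>m. \<exists>C. C 0 = X \<and> C m = Y \<and> ochain C m", OF P bnd[rule_format]])
qed

lemma ochain_two:
  assumes "X \<subset> Y" "omodule OL X" "omodule OL Y"
  shows "ochain (\<lambda>j::nat. if j = 0 then X else Y) 1"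
  unfolding ochain_def
proof (intro conjI allI impI)
  fix j :: nat assume "j < 1" then show "(if j = 0 then X else Y) \<subset> (if Suc j = 0 then X else Y)"
    using assms by simp
next
  fix j :: nat assume "j \<le> 1" then show "omodule OL (if j = 0 then X else Y)" using assms by simp
qed

lemma chain_exists:
  assumes "X \<subseteq> Y" "omodule OL X" "omodule OL Y"
  shows "\<exists>m C. C 0 = X \<and> C m = Y \<and> ochain C m"
proof (cases "X = Y")
  case True
  then have "ochain (\<lambda>_. X) 0" using assms unfolding ochain_def by simp
  then have "(\<lambda>_. X) (0::nat) = X \<and> (\<lambda>_. X) (0::nat) = Y \<and> ochain (\<lambda>_. X) 0" using True by simp
  then show ?thesis by (intro exI)
next
  case False
  then have "X \<subset> Y" using assms by blast
  from ochain_two[OF this assms(2,3)]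
  have "(\<lambda>j::nat. if j = 0 then X else Y) 0 = X \<and> (\<lambda>j::nat. if j = 0 then X else Y) 1 = Y \<and>
    ochain (\<lambda>j::nat. if j = 0 then X else Y) 1" by simp
  then show ?thesis by (intro exI)
qed

lemma olength_witness:
  assumes "inreg X Y" "X \<subseteq> Y" "omodule OL X" "omodule OL Y"
  shows "\<exists>C. C 0 = X \<and> C (olength OL X Y) = Y \<and> ochain C (olength OL X Y)"
proof -
  obtain K where K: "\<forall>C m. ochain C m \<longrightarrow> C 0 = X \<longrightarrow> C m = Y \<longrightarrow> m \<le> K"
    using inreg_bounded[OF assms(1)] by blast
  obtain m where P': "\<exists>C. C 0 = X \<and> C m = Y \<and> ochain C m" using chain_exists[OF assms(2-4)] by auto
  have bnd: "\<forall>y. (\<exists>C. C 0 = X \<and> C y = Y \<and> ochain C y) \<longrightarrow> y \<le> K" using K by blast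
  show ?thesis unfolding olength_ochain by (rule GreatestI_nat[where P="\<lambda>m. \<exists>C. C 0 = X \<and> C m = Y \<and> ochain C m", OF P' bnd[rule_format]])
qed

lemma olength_refl: assumes "omodule OL X" shows "olength OL X X = 0"
  unfolding olength_ochain
proof (rule Greatest_equality)
  show "\<exists>C. C 0 = X \<and> C 0 = X \<and> ochain C 0" using assms unfolding ochain_def by auto
next
  fix y assume "\<exists>C. C 0 = X \<and> C y = X \<and> ochain C y"
  then obtain C where C: "C 0 = X" "C y = X" "ochain C y" by blast
  show "y \<le> 0"
  proof (rule ccontr)
    assume "\<not> y \<le> 0"
    then have "C 0 \<subset> C y" using ochain_strict[OF C(3), of 0 y] by simp
    then show False using C by simp
  qed
qed

lemma olength_one:
  assumes "X \<subset> Y" "omodule OL X" "omodule OL Y"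
    and nb: "\<And>D. omodule OL D \<Longrightarrow> X \<subseteq> D \<Longrightarrow> D \<subseteq> Y \<Longrightarrow> D = X \<or> D = Y"
  shows "olength OL X Y = 1"
  unfolding olength_ochain
proof (rule Greatest_equality)
  have "ochain (\<lambda>j::nat. if j = 0 then X else Y) 1" using ochain_two assms by blast
  then have "(\<lambda>j::nat. if j = 0 then X else Y) 0 = X \<and> (\<lambda>j::nat. if j = 0 then X else Y) 1 = Y \<and>
    ochain (\<lambda>j::nat. if j = 0 then X else Y) 1" by simp
  then show "\<exists>C. C 0 = X \<and> C 1 = Y \<and> ochain C 1" by (intro exI)
next
  fix y assume "\<exists>C. C 0 = X \<and> C y = Y \<and> ochain C y"
  then obtain C where C: "C 0 = X" "C y = Y" "ochain C y" by blast
  show "y \<le> 1"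
  proof (rule ccontr)
    assume "\<not> y \<le> 1"
    then have "C 0 \<subset> C 1" "C 1 \<subset> C y" using ochain_strict[OF C(3)] by auto
    moreover have "omodule OL (C 1)" using C(3) \<open>\<not> y \<le> 1\<close> unfolding ochain_def by auto
    ultimately show False using nb[of "C 1"] C by auto
  qed
qed

lemma olength_zero_eq:
  assumes "inreg X Y" "X \<subseteq> Y" "omodule OL X" "omodule OL Y" "olength OL X Y = 0"
  shows "X = Y"
proof (rule ccontr)
  assume "X \<noteq> Y"
  define C where "C = (\<lambda>j::nat. if j = 0 then X else Y)"
  have "X \<subset> Y" using assms \<open>X \<noteq> Y\<close> by blast
  then have "ochain C 1" using ochain_two assms unfolding C_def by blast
  moreover have "C 0 = X" "C 1 = Y" unfolding C_def by simp_all
  ultimately have "1 \<le> olength OL X Y" using olength_ge[OF assms(1)] by blast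
  then show False using assms by simp
qed

lemma olength_one_between:
  assumes "inreg X Y" "X \<subseteq> D" "D \<subseteq> Y" "omodule OL X" "omodule OL Y" "omodule OL D"
    "olength OL X Y = 1"
  shows "D = X \<or> D = Y"
proof (rule ccontr)
  assume "\<not> (D = X \<or> D = Y)"
  define C where "C = (\<lambda>j::nat. if j = 0 then X else if j = 1 then D else Y)"
  have "ochain C 2" unfolding ochain_def
  proof (intro conjI allI impI)
    fix j :: nat assume "j < 2"
    then have "j = 0 \<or> j = 1" by auto
    then show "C j \<subset> C (Suc j)" using assms \<open>\<not> (D = X \<or> D = Y)\<close> unfolding C_def by auto
  next
    fix j :: nat assume "j \<le> 2"
    then have "j = 0 \<or> j = 1 \<or> j = 2" by auto
    then show "omodule OL (C j)" using assms unfolding C_def by auto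
  qed
  moreover have "C 0 = X" "C 2 = Y" unfolding C_def by simp_all
  ultimately have "2 \<le> olength OL X Y" using olength_ge[OF assms(1)] by blast
  then show False using assms by simp
qed

lemma compress:
  assumes "\<forall>j<m. D j \<subseteq> D (Suc j)" "\<forall>j\<le>m. omodule OL (D j)"
  shows "\<exists>C. C 0 = D 0 \<and> C (card {j. j < m \<and> D j \<noteq> D (Suc j)}) = D m \<and>
     ochain C (card {j. j < m \<and> D j \<noteq> D (Suc j)})"
  using assms
proof (induction m)
  case 0
  have "ochain D 0" using 0 unfolding ochain_def by simp
  then show ?case by (intro exI[of _ D]) simp
next
  case (Suc m)
  define s where "s = card {j. j < m \<and> D j \<noteq> D (Suc j)}"
  obtain C where C: "C 0 = D 0" "C s = D m" "ochain C s" using Suc unfolding s_def by auto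
  show ?case
  proof (cases "D m = D (Suc m)")
    case True
    have "{j. j < Suc m \<and> D j \<noteq> D (Suc j)} = {j. j < m \<and> D j \<noteq> D (Suc j)}"
      using True less_Suc_eq by auto
    then show ?thesis using C True unfolding s_def by (intro exI[of _ C]) simp
  next
    case False
    have eq: "{j. j < Suc m \<and> D j \<noteq> D (Suc j)} = insert m {j. j < m \<and> D j \<noteq> D (Suc j)}"
      using False less_Suc_eq by auto
    have card: "card {j. j < Suc m \<and> D j \<noteq> D (Suc j)} = Suc s"
      unfolding eq s_def by (subst card_insert_disjoint) auto
    define C' where "C' = (\<lambda>j. if j \<le> s then C j else D (Suc m))"
    have "ochain C' (Suc s)"
      unfolding ochain_def
    proof (intro conjI allI impI)
      fix j assume j: "j < Suc s"
      show "C' j \<subset> C' (Suc j)"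
      proof (cases "j < s")
        case True then show ?thesis using C(3) unfolding ochain_def C'_def by auto
      next
        case False
        then have "j = s" using j by simp
        then show ?thesis using C(2) False Suc.prems(1) \<open>D m \<noteq> D (Suc m)\<close> unfolding C'_def by auto
      qed
    next
      fix j assume j: "j \<le> Suc s"
      show "omodule OL (C' j)"
        using C(3) Suc.prems(2) j unfolding ochain_def C'_def by auto
    qed
    moreover have "C' 0 = D 0" "C' (Suc s) = D (Suc m)" using C unfolding C'_def by auto
    ultimately show ?thesis using card by (intro exI[of _ C']) simp
  qed
qed

definition msum :: "(nat \<Rightarrow> 'L) set \<Rightarrow> (nat \<Rightarrow> 'L) set \<Rightarrow> (nat \<Rightarrow> 'L) set" where
  "msum S T = {vadd a b | a b. a \<in> S \<and> b \<in> T}"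

lemma omodule_int: "omodule OL S \<Longrightarrow> omodule OL T \<Longrightarrow> omodule OL (S \<inter> T)"
  unfolding omodule_def by blast

lemma omodule_msum: assumes "omodule OL S" "omodule OL T" shows "omodule OL (msum S T)"
  unfolding omodule_def msum_def
proof (intro conjI ballI)
  show "zv \<in> {vadd a b |a b. a \<in> S \<and> b \<in> T}"
    using omod_zero[OF assms(1)] omod_zero[OF assms(2)] by force
next
  fix x y assume "x \<in> {vadd a b |a b. a \<in> S \<and> b \<in> T}" "y \<in> {vadd a b |a b. a \<in> S \<and> b \<in> T}"
  then obtain a b a' b' where ab: "x = vadd a b" "a \<in> S" "b \<in> T" "y = vadd a' b'" "a' \<in> S" "b' \<in> T" by blast
  have "vadd x y = vadd (vadd a a') (vadd b b')" unfolding ab by (simp add: vadd_def algebra_simps)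
  then show "vadd x y \<in> {vadd a b |a b. a \<in> S \<and> b \<in> T}"
    using ab omod_add[OF assms(1)] omod_add[OF assms(2)] by blast
next
  fix c x assume c: "c \<in> OL" and "x \<in> {vadd a b |a b. a \<in> S \<and> b \<in> T}"
  then obtain a b where ab: "x = vadd a b" "a \<in> S" "b \<in> T" by blast
  have "vsc c x = vadd (vsc c a) (vsc c b)" unfolding ab by (simp add: vsc_vadd)
  then show "vsc c x \<in> {vadd a b |a b. a \<in> S \<and> b \<in> T}"
    using ab c omod_sc[OF assms(1)] omod_sc[OF assms(2)] by blast
qed

lemma inreg_sub: "inreg X Z \<Longrightarrow> X \<subseteq> X' \<Longrightarrow> Y' \<subseteq> Z \<Longrightarrow> inreg X' Y'"
  unfolding inreg_def by blast

lemma olength_add: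
  assumes reg: "inreg X Z" and XY: "X \<subseteq> Y" and YZ: "Y \<subseteq> Z"
    and oX: "omodule OL X" and oY: "omodule OL Y" and oZ: "omodule OL Z"
  shows "olength OL X Z = olength OL X Y + olength OL Y Z"
proof (rule antisym)
  have rXY: "inreg X Y" using inreg_sub[OF reg] YZ by blast
  have rYZ: "inreg Y Z" using inreg_sub[OF reg] XY by blast
  have XZ: "X \<subseteq> Z" using XY YZ by (rule subset_trans)
  obtain E where E: "E 0 = X" "E (olength OL X Z) = Z" "ochain E (olength OL X Z)"
    using olength_witness[OF reg XZ oX oZ] by (elim exE conjE) (rule that)
  define M where "M = olength OL X Z"
  define D1 where "D1 = (\<lambda>j. E j \<inter> Y)"
  define D2 where "D2 = (\<lambda>j. msum (E j) Y)"
  have Emono: "\<forall>j<M. E j \<subseteq> E (Suc j)" using E(3) unfolding ochain_def M_def by auto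
  have Eom: "\<forall>j\<le>M. omodule OL (E j)" using E(3) unfolding ochain_def M_def by auto
  have D1m: "\<forall>j<M. D1 j \<subseteq> D1 (Suc j)" using Emono unfolding D1_def by auto
  have D2m: "\<forall>j<M. D2 j \<subseteq> D2 (Suc j)" using Emono unfolding D2_def msum_def by blast
  have D1o: "\<forall>j\<le>M. omodule OL (D1 j)" using Eom oY omodule_int unfolding D1_def by simp
  have D2o: "\<forall>j\<le>M. omodule OL (D2 j)" using Eom oY omodule_msum unfolding D2_def by simp
  have msum_sub: "msum S T = T" if "S \<subseteq> T" "omodule OL S" "omodule OL T" for S T
  proof
    show "msum S T \<subseteq> T" unfolding msum_def using that omod_add[OF that(3)] by blast
    show "T \<subseteq> msum S T"
    proof
      fix x assume "x \<in> T"
      then have "x = vadd zv x" "zv \<in> S" using omod_zero[OF that(2)] by auto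
      then show "x \<in> msum S T" unfolding msum_def using \<open>x \<in> T\<close> by blast
    qed
  qed
  have msum_sub2: "msum T S = T" if "S \<subseteq> T" "omodule OL S" "omodule OL T" for S T
  proof -
    have "msum T S = msum S T" unfolding msum_def by (metis vadd_comm)
    then show ?thesis using msum_sub[OF that] by simp
  qed
  have D10: "D1 0 = X" "D1 M = Y" unfolding D1_def M_def using E XY YZ by auto
  have D20: "D2 0 = Y" "D2 M = Z" unfolding D2_def M_def
    using E msum_sub[OF XY oX oY] msum_sub2[OF YZ oY oZ] by simp_all
  define S1 where "S1 = {j. j < M \<and> D1 j \<noteq> D1 (Suc j)}"
  define S2 where "S2 = {j. j < M \<and> D2 j \<noteq> D2 (Suc j)}"
  have c1: "card S1 \<le> olength OL X Y"
  proof -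
    obtain C where "C 0 = D1 0" "C (card S1) = D1 M" "ochain C (card S1)"
      using compress[OF D1m D1o, folded S1_def] by (elim exE conjE) (rule that)
    then show ?thesis using olength_ge[OF rXY] D10 by simp
  qed
  have c2: "card S2 \<le> olength OL Y Z"
  proof -
    obtain C where "C 0 = D2 0" "C (card S2) = D2 M" "ochain C (card S2)"
      using compress[OF D2m D2o, folded S2_def] by (elim exE conjE) (rule that)
    then show ?thesis using olength_ge[OF rYZ] D20 by simp
  qed
  have "{..<M} \<subseteq> S1 \<union> S2"
  proof
    fix j assume j: "j \<in> {..<M}"
    show "j \<in> S1 \<union> S2"
    proof (rule ccontr)
      assume "j \<notin> S1 \<union> S2"
      then have eq1: "D1 j = D1 (Suc j)" and eq2: "D2 j = D2 (Suc j)" using j unfolding S1_def S2_def by auto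
      have strict: "E j \<subset> E (Suc j)" using E(3) j unfolding ochain_def M_def by auto
      have oS: "omodule OL (E (Suc j))" using Eom j by auto
      have "E (Suc j) \<subseteq> E j"
      proof
        fix x assume x: "x \<in> E (Suc j)"
        have "x = vadd x zv" by simp
        then have "x \<in> D2 (Suc j)" unfolding D2_def msum_def using x omod_zero[OF oY] by blast
        then have "x \<in> D2 j" using eq2 by simp
        then obtain a b where ab: "x = vadd a b" "a \<in> E j" "b \<in> Y" unfolding D2_def msum_def by blast
        have "b = vadd x (vsc (-1) a)" using ab(1) by (simp add: vadd_def vsc_def fun_eq_iff)
        moreover have "vadd x (vsc (-1) a) \<in> E (Suc j)"
          using x ab(2) strict omod_add[OF oS] omod_sc[OF oS] by auto
        ultimately have "b \<in> D1 (Suc j)" using ab(3) unfolding D1_def by simp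
        then have "b \<in> E j" using eq1 unfolding D1_def by blast
        moreover have "omodule OL (E j)" using Eom j by simp
        ultimately show "x \<in> E j" using ab omod_add by simp
      qed
      then show False using strict by blast
    qed
  qed
  moreover have "finite (S1 \<union> S2)"
    by (rule finite_subset[of _ "{..<M}"]) (auto simp: S1_def S2_def)
  ultimately have "card {..<M} \<le> card (S1 \<union> S2)" by (rule card_mono[rotated])
  then have "M \<le> card (S1 \<union> S2)" by simp
  also have "\<dots> \<le> card S1 + card S2" by (rule card_Un_le)
  finally show "olength OL X Z \<le> olength OL X Y + olength OL Y Z" using c1 c2 M_def by simp
next
  have rXY: "inreg X Y" using inreg_sub[OF reg] YZ by blast
  have rYZ: "inreg Y Z" using inreg_sub[OF reg] XY by blast
  define p where "p = olength OL X Y"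
  define q where "q = olength OL Y Z"
  obtain C1 where C1: "C1 0 = X" "C1 p = Y" "ochain C1 p"
    using olength_witness[OF rXY XY oX oY, folded p_def] by (elim exE conjE) (rule that)
  obtain C2 where C2: "C2 0 = Y" "C2 q = Z" "ochain C2 q"
    using olength_witness[OF rYZ YZ oY oZ, folded q_def] by (elim exE conjE) (rule that)
  define E where "E = (\<lambda>j. if j \<le> p then C1 j else C2 (j - p))"
  have E': "\<And>j. p \<le> j \<Longrightarrow> E j = C2 (j - p)" unfolding E_def using C1(2) C2(1) by auto
  have "ochain E (p + q)"
    unfolding ochain_def
  proof (intro conjI allI impI)
    fix j assume j: "j < p + q"
    show "E j \<subset> E (Suc j)"
    proof (cases "j < p")
      case True then show ?thesis using C1(3) unfolding ochain_def E_def by auto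
    next
      case False
      then have "E j = C2 (j - p)" "E (Suc j) = C2 (Suc (j - p))" using E'[of j] E'[of "Suc j"] by (auto simp: Suc_diff_le)
      then show ?thesis using C2(3) j False unfolding ochain_def by auto
    qed
  next
    fix j assume j: "j \<le> p + q"
    show "omodule OL (E j)"
    proof (cases "j \<le> p")
      case True then show ?thesis using C1(3) unfolding ochain_def E_def by auto
    next
      case False then show ?thesis using E'[of j] C2(3) j unfolding ochain_def by auto
    qed
  qed
  moreover have "E 0 = X" "E (p + q) = Z" using C1 C2 E'[of "p+q"] unfolding E_def by auto
  ultimately show "olength OL X Y + olength OL Y Z \<le> olength OL X Z"
    using olength_ge[OF reg, of E "p + q"] unfolding p_def q_def by simp
qed

lemma omodule_scale: assumes D: "omodule OL D" shows "omodule OL (vsc c ` D)"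
  unfolding omodule_def
proof (intro conjI ballI)
  have "vsc c zv \<in> vsc c ` D" using omod_zero[OF D] by (rule imageI)
  then show "zv \<in> vsc c ` D" by simp
next
  fix x y assume "x \<in> vsc c ` D" "y \<in> vsc c ` D"
  then obtain x' y' where xy: "x = vsc c x'" "y = vsc c y'" "x' \<in> D" "y' \<in> D" by blast
  have "vsc c (vadd x' y') \<in> vsc c ` D" using omod_add[OF D xy(3,4)] by (rule imageI)
  then show "vadd x y \<in> vsc c ` D" using xy(1,2) by (simp add: vsc_vadd)
next
  fix a x assume a: "a \<in> OL" and "x \<in> vsc c ` D"
  then obtain x' where x: "x = vsc c x'" "x' \<in> D" by blast
  have "vsc c (vsc a x') \<in> vsc c ` D" using omod_sc[OF D a x(2)] by (rule imageI)
  then show "vsc a x \<in> vsc c ` D" using x(1) by (simp add: mult.commute)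
qed

lemma vsc_image_inv: "c \<noteq> 0 \<Longrightarrow> vsc (inverse c) ` vsc c ` X = X"
  by (simp add: image_image)

lemma inj_vsc: "c \<noteq> 0 \<Longrightarrow> inj (vsc c)"
  using vsc_inj by (auto intro: injI)

lemma psub_image: "inj f \<Longrightarrow> P \<subset> Q \<Longrightarrow> f ` P \<subset> f ` Q"
  by (metis image_mono inj_image_eq_iff psubset_eq)

lemma ochain_scale:
  assumes "ochain C m" "d \<noteq> 0" shows "ochain (\<lambda>j. vsc d ` C j) m"
  using assms psub_image[OF inj_vsc[OF assms(2)]] omodule_scale unfolding ochain_def by simp

lemma olength_scale:
  assumes c: "c \<noteq> 0"
  shows "olength OL (vsc c ` X) (vsc c ` Y) = olength OL X Y"
proof -
  have "(\<exists>C. C 0 = vsc c ` X \<and> C m = vsc c ` Y \<and> ochain C m) \<longleftrightarrow> (\<exists>C. C 0 = X \<and> C m = Y \<and> ochain C m)" for m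
  proof
    assume "\<exists>C. C 0 = vsc c ` X \<and> C m = vsc c ` Y \<and> ochain C m"
    then obtain C where C: "C 0 = vsc c ` X" "C m = vsc c ` Y" "ochain C m" by blast
    have "ochain (\<lambda>j. vsc (inverse c) ` C j) m" using ochain_scale[OF C(3)] c by simp
    moreover have "vsc (inverse c) ` C 0 = X" "vsc (inverse c) ` C m = Y" using C vsc_image_inv[OF c] by simp_all
    ultimately show "\<exists>C. C 0 = X \<and> C m = Y \<and> ochain C m" by (intro exI[of _ "\<lambda>j. vsc (inverse c) ` C j"]) simp
  next
    assume "\<exists>C. C 0 = X \<and> C m = Y \<and> ochain C m"
    then obtain C where C: "C 0 = X" "C m = Y" "ochain C m" by blast
    have "ochain (\<lambda>j. vsc c ` C j) m" using ochain_scale[OF C(3) c] .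
    then show "\<exists>C. C 0 = vsc c ` X \<and> C m = vsc c ` Y \<and> ochain C m" using C
      by (intro exI[of _ "\<lambda>j. vsc c ` C j"]) simp
  qed
  then show ?thesis unfolding olength_ochain by simp
qed

end

context setting begin

definition sc :: "int \<Rightarrow> (nat \<Rightarrow> 'L) set \<Rightarrow> (nat \<Rightarrow> 'L) set" where
  "sc t X = vsc (\<pi> powi (- t)) ` X"

lemma powi_nz: "\<pi> powi t \<noteq> 0" using pi_nz by simp

lemma sc_0[simp]: "sc 0 X = X" unfolding sc_def by simp
lemma sc_sc: "sc s (sc t X) = sc (s + t) X"
  unfolding sc_def image_image using pi_nz by (simp add: power_int_add[symmetric] add.commute)
lemma sc_inv_pi: "vsc (inverse \<pi>) ` sc t X = sc (t + 1) X"
proof -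
  have "inverse \<pi> * \<pi> powi (- t) = \<pi> powi (- (t + 1))"
    using pi_nz by (simp add: power_int_diff power_int_minus field_simps)
  then show ?thesis unfolding sc_def image_image by simp
qed
lemma sc_pi: "vsc \<pi> ` sc t X = sc (t - 1) X"
proof -
  have "\<pi> powi (1 + - t) = \<pi> powi 1 * \<pi> powi (- t)" by (rule power_int_add) (simp add: pi_nz)
  then have "\<pi> * \<pi> powi (- t) = \<pi> powi (- (t - 1))" by simp
  then show ?thesis unfolding sc_def image_image by simp
qed
lemma sc_lattice: "Defs.lattice n OL X \<Longrightarrow> Defs.lattice n OL (sc t X)"
  unfolding sc_def by (rule lattice_scale[OF _ powi_nz])
lemma sc_dual: "X \<subseteq> vecs n \<Longrightarrow> dual (sc t X) = sc (- t) (dual X)"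
proof -
  assume X: "X \<subseteq> vecs n"
  have "dual (vsc (\<pi> powi (- t)) ` X) = vsc (inverse (\<pi> powi (- t))) ` dual X"
    by (rule dual_scale[OF X powi_nz])
  moreover have "inverse (\<pi> powi (- t)) = \<pi> powi (- (- t))" by (simp add: power_int_minus)
  ultimately show ?thesis unfolding sc_def by simp
qed
lemma sc_olength: "olength OL (sc t X) (sc t Y) = olength OL X Y"
  unfolding sc_def by (rule olength_scale[OF powi_nz])
lemma sc_mono: "X \<subseteq> Y \<Longrightarrow> sc t X \<subseteq> sc t Y"
  unfolding sc_def by (rule image_mono)
lemma sc_inj: "sc t X = sc t Y \<Longrightarrow> X = Y"
  unfolding sc_def using inj_vsc[OF powi_nz] by (simp add: inj_image_eq_iff)
lemma sc_omodule: "omodule OL X \<Longrightarrow> omodule OL (sc t X)"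
  unfolding sc_def by (rule omodule_scale)

lemma lat_om: "Defs.lattice n OL X \<Longrightarrow> omodule OL X" by (rule lattice_omodule)

lemma len1_pi:
  assumes A: "Defs.lattice n OL A" and M: "Defs.lattice n OL M" and AM: "A \<subseteq> M"
    and l1: "olength OL A M = 1"
  shows "vsc \<pi> ` M \<subseteq> A"
proof -
  have oA: "omodule OL A" and oM: "omodule OL M" using A M by (simp_all add: lat_om)
  define D where "D = msum A (vsc \<pi> ` M)"
  have oD: "omodule OL D" unfolding D_def using oA oM by (simp add: omodule_msum omodule_scale)
  have AD: "A \<subseteq> D"
  proof
    fix a assume "a \<in> A"
    moreover have "zv \<in> vsc \<pi> ` M" using omod_zero[OF oM] omod_zero[OF omodule_scale[OF oM]] by blast
    moreover have "a = vadd a zv" by simp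
    ultimately show "a \<in> D" unfolding D_def msum_def by blast
  qed
  have DM: "D \<subseteq> M"
  proof
    fix x assume "x \<in> D"
    then obtain a y where "x = vadd a (vsc \<pi> y)" "a \<in> A" "y \<in> M" unfolding D_def msum_def by blast
    then show "x \<in> M" using AM omod_add[OF oM] omod_sc[OF oM, OF OL_pi] by blast
  qed
  have "D = A \<or> D = M"
    by (rule olength_one_between[OF inreg_lat[OF A M] AD DM oA oM oD l1])
  then show ?thesis
  proof
    assume "D = A"
    show ?thesis
    proof
      fix x assume "x \<in> vsc \<pi> ` M"
      moreover have "x = vadd zv x" by simp
      ultimately have "x \<in> D" unfolding D_def msum_def using omod_zero[OF oA] by blast
      then show "x \<in> A" using \<open>D = A\<close> by simp
    qed
  next
    assume DMe: "D = M"
    have nak: "\<forall>x\<in>M. \<exists>a\<in>A. \<exists>z\<in>M. x = vadd a (vsc (\<pi> ^ j) z)" for j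
    proof (induction j)
      case 0
      show ?case
      proof
        fix x assume "x \<in> M"
        moreover have "x = vadd zv (vsc (\<pi> ^ 0) x)" by simp
        ultimately show "\<exists>a\<in>A. \<exists>z\<in>M. x = vadd a (vsc (\<pi> ^ 0) z)" using omod_zero[OF oA] by blast
      qed
    next
      case (Suc j)
      show ?case
      proof
        fix x assume "x \<in> M"
        then obtain a z where az: "a \<in> A" "z \<in> M" "x = vadd a (vsc (\<pi> ^ j) z)" using Suc by blast
        then have "z \<in> D" using DMe by simp
        then obtain a' z' where az': "z = vadd a' (vsc \<pi> z')" "a' \<in> A" "z' \<in> M"
          unfolding D_def msum_def by blast
        have "x = vadd (vadd a (vsc (\<pi> ^ j) a')) (vsc (\<pi> ^ Suc j) z')"
          using az(3) az'(1) by (simp add: vadd_def vsc_def fun_eq_iff algebra_simps)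
        moreover have "vadd a (vsc (\<pi> ^ j) a') \<in> A" using az(1) az'(2) omod_add[OF oA] omod_sc[OF oA] by simp
        ultimately show "\<exists>a\<in>A. \<exists>z\<in>M. x = vadd a (vsc (\<pi> ^ Suc j) z)" using az'(3) by blast
      qed
    qed
    obtain e where e: "basis e" "A = span e" using A lattice_iff by blast
    obtain N where N: "M \<subseteq> region e N" using comparable[OF e(1) M] by blast
    have "M \<subseteq> A"
    proof
      fix x assume "x \<in> M"
      then obtain a z where "a \<in> A" "z \<in> M" "x = vadd a (vsc (\<pi> ^ N) z)" using nak by blast
      moreover have "vsc (\<pi> ^ N) z \<in> A" using region_scale[OF e(1)] N \<open>z \<in> M\<close> e(2) by blast
      ultimately show "x \<in> A" using omod_add[OF oA] by simp
    qed
    then have "M = A" using AM by blast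
    then show ?thesis using l1 olength_refl[OF oA] by simp
  qed
qed

lemma len1_gen:
  assumes A: "Defs.lattice n OL A" and M: "Defs.lattice n OL M" and AM: "A \<subseteq> M"
    and l1: "olength OL A M = 1"
  shows "\<exists>x0\<in>M. x0 \<notin> A \<and> (\<forall>y\<in>M. \<exists>a\<in>A. \<exists>c\<in>OL. y = vadd a (vsc c x0))"
proof -
  have oA: "omodule OL A" and oM: "omodule OL M" using A M by (simp_all add: lat_om)
  have "M \<noteq> A" using l1 olength_refl[OF oA] by auto
  then obtain x0 where x0: "x0 \<in> M" "x0 \<notin> A" using AM by blast
  define D where "D = msum A {vsc c x0 | c. c \<in> OL}"
  have oL: "omodule OL {vsc c x0 | c. c \<in> OL}"
    unfolding omodule_def
  proof (intro conjI ballI)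
    have "zv = vsc 0 x0" by simp
    then show "zv \<in> {vsc c x0 |c. c \<in> OL}" using OL_0 by blast
    fix x y assume "x \<in> {vsc c x0 |c. c \<in> OL}" "y \<in> {vsc c x0 |c. c \<in> OL}"
    then obtain c d where "x = vsc c x0" "y = vsc d x0" "c \<in> OL" "d \<in> OL" by blast
    then have "vadd x y = vsc (c + d) x0" "c + d \<in> OL" by (simp_all add: vsc_add)
    then show "vadd x y \<in> {vsc c x0 |c. c \<in> OL}" by blast
  next
    fix a x assume "a \<in> OL" "x \<in> {vsc c x0 |c. c \<in> OL}"
    then obtain c where "x = vsc c x0" "c \<in> OL" by blast
    then have "vsc a x = vsc (a * c) x0" "a * c \<in> OL" using \<open>a \<in> OL\<close> by simp_all
    then show "vsc a x \<in> {vsc c x0 |c. c \<in> OL}" by blast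
  qed
  have oD: "omodule OL D" unfolding D_def using oA oL by (rule omodule_msum)
  have AD: "A \<subseteq> D"
  proof
    fix a assume "a \<in> A"
    moreover have "zv \<in> {vsc c x0 |c. c \<in> OL}" using omod_zero[OF oL] .
    moreover have "a = vadd a zv" by simp
    ultimately show "a \<in> D" unfolding D_def msum_def by blast
  qed
  have DM: "D \<subseteq> M"
  proof
    fix x assume "x \<in> D"
    then obtain a c where "x = vadd a (vsc c x0)" "a \<in> A" "c \<in> OL" unfolding D_def msum_def by blast
    then show "x \<in> M" using AM x0 omod_add[OF oM] omod_sc[OF oM] by blast
  qed
  have "x0 \<in> D"
  proof -
    have "x0 = vadd zv (vsc 1 x0)" by simp
    then show ?thesis unfolding D_def msum_def using omod_zero[OF oA] OL_1 by blast
  qed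
  then have "D \<noteq> A" using x0 by blast
  then have "D = M" using olength_one_between[OF inreg_lat[OF A M] AD DM oA oM oD l1] by blast
  then have "\<forall>y\<in>M. \<exists>a\<in>A. \<exists>c\<in>OL. y = vadd a (vsc c x0)" unfolding D_def msum_def by blast
  then show ?thesis using x0 by blast
qed

lemma B_vadd_sc_l:
  assumes "y \<in> vecs n" "c \<in> vecs n" "z \<in> vecs n"
  shows "B (vadd y (vsc s c)) z = B y z + s * B c z"
  using assms by (simp add: B_add_l B_sc_l)

lemma len1_dual:
  assumes A: "Defs.lattice n OL A" and M: "Defs.lattice n OL M" and AM: "A \<subseteq> M"
    and l1: "olength OL A M = 1"
  shows "dual M \<subseteq> dual A" "olength OL (dual M) (dual A) = 1"
proof -
  show sub: "dual M \<subseteq> dual A" using AM by (rule dual_anti)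
  have piM: "vsc \<pi> ` M \<subseteq> A" by (rule len1_pi[OF A M AM l1])
  obtain x0 where x0: "x0 \<in> M" "x0 \<notin> A" "\<forall>y\<in>M. \<exists>a\<in>A. \<exists>c\<in>OL. y = vadd a (vsc c x0)"
    using len1_gen[OF A M AM l1] by blast
  have Mv: "M \<subseteq> vecs n" and Av: "A \<subseteq> vecs n" using lattice_vecs A M by auto
  have x0v: "x0 \<in> vecs n" using x0 Mv by blast
  have dA: "Defs.lattice n OL (dual A)" "dual (dual A) = A" using dual_lattice_props[OF A] by auto
  have dM: "Defs.lattice n OL (dual M)" using dual_lattice_props[OF M] by auto
  have dAv: "dual A \<subseteq> vecs n" using lattice_vecs[OF dA(1)] .
  have odA: "omodule OL (dual A)" using lat_om[OF dA(1)] .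
  have char: "y \<in> dual M \<longleftrightarrow> y \<in> dual A \<and> B y x0 \<in> OL" for y
  proof
    assume y: "y \<in> dual M"
    then have "y \<in> dual A" using sub by blast
    moreover have "B y x0 \<in> OL" using y x0(1) by (simp add: dual_iff)
    ultimately show "y \<in> dual A \<and> B y x0 \<in> OL" by blast
  next
    assume y: "y \<in> dual A \<and> B y x0 \<in> OL"
    have yv: "y \<in> vecs n" using y dAv by blast
    have "\<forall>z\<in>M. B y z \<in> OL"
    proof
      fix z assume "z \<in> M"
      then obtain a c where ac: "a \<in> A" "c \<in> OL" "z = vadd a (vsc c x0)" using x0(3) by blast
      have "B y z = B y a + c * B y x0" using ac Av x0v yv by (auto simp: B_add_r B_sc_r)
      then show "B y z \<in> OL" using y ac by (auto simp: dual_iff)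
    qed
    then show "y \<in> dual M" using yv by (simp add: dual_iff)
  qed
  have pib: "\<pi> * B y x0 \<in> OL" if "y \<in> dual A" for y
  proof -
    have "vsc \<pi> x0 \<in> A" using piM x0(1) by blast
    then have "B y (vsc \<pi> x0) \<in> OL" using that by (auto simp: dual_iff)
    then show ?thesis using that dAv x0v by (auto simp: B_sc_r)
  qed
  have ne: "dual M \<noteq> dual A"
  proof
    assume eq: "dual M = dual A"
    have "\<forall>y\<in>dual A. B x0 y \<in> OL"
    proof
      fix y assume y: "y \<in> dual A"
      then have "B y x0 \<in> OL" using char eq by blast
      moreover have "B x0 y = - B y x0" using B_antisym x0v y dAv by blast
      ultimately show "B x0 y \<in> OL" by simp
    qed
    then have "x0 \<in> dual (dual A)" using x0v by (simp add: dual_iff)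
    then show False using dA(2) x0(2) by simp
  qed
  show "olength OL (dual M) (dual A) = 1"
  proof (rule olength_one)
    show "dual M \<subset> dual A" using sub ne by blast
    show "omodule OL (dual M)" using lat_om[OF dM] .
    show "omodule OL (dual A)" using odA .
    fix D assume oD: "omodule OL D" and D1: "dual M \<subseteq> D" and D2: "D \<subseteq> dual A"
    show "D = dual M \<or> D = dual A"
    proof (cases "D \<subseteq> dual M")
      case True then show ?thesis using D1 by blast
    next
      case False
      then obtain c where c: "c \<in> D" "c \<notin> dual M" by blast
      then have cA: "c \<in> dual A" and cb: "B c x0 \<notin> OL" using char D2 by auto
      have cv: "c \<in> vecs n" using cA dAv by blast
      have "dual A \<subseteq> D"
      proof
        fix y assume y: "y \<in> dual A"
        have yv: "y \<in> vecs n" using y dAv by blast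
        define lam where "lam = B y x0 / B c x0"
        have "\<pi> ^ Suc 0 * B y x0 \<in> OL" using pib[OF y] by simp
        moreover have "\<pi> ^ 0 * B c x0 \<notin> OL" using cb by simp
        ultimately have lam: "lam \<in> OL" unfolding lam_def by (rule OL_div_key)
        have cnz: "B c x0 \<noteq> 0" using cb by auto
        define y' where "y' = vadd y (vsc (- lam) c)"
        have "y' \<in> dual A" unfolding y'_def using y cA lam omod_add[OF odA] omod_sc[OF odA] by simp
        moreover have "B y' x0 = 0"
          unfolding y'_def using B_vadd_sc_l[OF yv cv x0v] cnz unfolding lam_def by simp
        ultimately have "y' \<in> dual M" using char by simp
        then have "y' \<in> D" using D1 by blast
        moreover have "y = vadd y' (vsc lam c)" unfolding y'_def by (simp add: vadd_def vsc_def fun_eq_iff)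
        ultimately show "y \<in> D" using c(1) lam omod_add[OF oD] omod_sc[OF oD] by simp
      qed
      then show ?thesis using D2 by blast
    qed
  qed
qed

end

lemma int_least_above:
  fixes J :: "int set"
  assumes "x0 \<in> J" "k < x0"
  shows "(LEAST l. l \<in> J \<and> k < l) \<in> J \<and> k < (LEAST l. l \<in> J \<and> k < l) \<and>
         (\<forall>x\<in>J. k < x \<longrightarrow> (LEAST l. l \<in> J \<and> k < l) \<le> x)"
proof -
  define m0 where "m0 = (LEAST m::nat. k + 1 + int m \<in> J)"
  have ex: "k + 1 + int (nat (x0 - k - 1)) \<in> J" using assms by simp
  have m0: "k + 1 + int m0 \<in> J" unfolding m0_def by (rule LeastI[where P="\<lambda>m. k + 1 + int m \<in> J", OF ex])
  have le: "k + 1 + int m0 \<le> y" if "y \<in> J" "k < y" for y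
  proof -
    have "k + 1 + int (nat (y - k - 1)) \<in> J" using that by simp
    then have "m0 \<le> nat (y - k - 1)" unfolding m0_def by (rule Least_le[where P="\<lambda>m. k + 1 + int m \<in> J"])
    then show ?thesis using that by linarith
  qed
  have "(LEAST l. l \<in> J \<and> k < l) = k + 1 + int m0"
    by (rule Least_equality) (use m0 le in auto)
  then show ?thesis using m0 le by auto
qed

lemma bracket_chain:
  fixes N :: "int \<Rightarrow> 'a set" and len :: "'a set \<Rightarrow> 'a set \<Rightarrow> nat" and a b :: "int \<Rightarrow> int"
  assumes JI: "J \<subseteq> I"
    and Jch: "\<forall>i\<in>J. \<forall>i'\<in>J. i < i' \<longrightarrow> N i \<subseteq> N i' \<and> len (N i) (N i') = nat (i' - i)"
    and br: "\<forall>i\<in>I. a i \<in> J \<and> b i \<in> J \<and> a i \<le> i \<and> i \<le> b i \<and> (\<forall>x\<in>J. x \<le> a i \<or> b i \<le> x) \<and>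
              N (a i) \<subseteq> N i \<and> N i \<subseteq> N (b i) \<and> len (N (a i)) (N i) = nat (i - a i) \<and>
              len (N i) (N (b i)) = nat (b i - i)"
    and brJ: "\<forall>i\<in>J. a i = i \<and> b i = i"
    and same: "\<forall>i\<in>I. \<forall>i'\<in>I. i < i' \<longrightarrow> i \<notin> J \<longrightarrow> i' \<notin> J \<longrightarrow> a i = a i' \<longrightarrow> b i = b i' \<longrightarrow>
              N i \<subseteq> N i' \<and> len (N i) (N i') = nat (i' - i)"
    and refl: "\<forall>i\<in>I. len (N i) (N i) = 0"
    and add: "\<forall>x\<in>I. \<forall>y\<in>I. \<forall>z\<in>I. N x \<subseteq> N y \<longrightarrow> N y \<subseteq> N z \<longrightarrow>
              len (N x) (N z) = len (N x) (N y) + len (N y) (N z)"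
  shows "\<forall>i\<in>I. \<forall>i'\<in>I. i < i' \<longrightarrow> N i \<subseteq> N i' \<and> len (N i) (N i') = nat (i' - i)"
proof (intro ballI impI)
  fix i i' assume i: "i \<in> I" and i': "i' \<in> I" and ii: "i < i'"
  note bi = br[rule_format, OF i] and bi' = br[rule_format, OF i']
  show "N i \<subseteq> N i' \<and> len (N i) (N i') = nat (i' - i)"
  proof (cases "b i \<le> a i'")
    case True
    have biI: "b i \<in> I" and aiI: "a i' \<in> I" using bi bi' JI by auto
    have c2: "N (b i) \<subseteq> N (a i') \<and> len (N (b i)) (N (a i')) = nat (a i' - b i)"
    proof (cases "b i < a i'")
      case True then show ?thesis using Jch bi bi' by blast
    next
      case False then have "b i = a i'" using \<open>b i \<le> a i'\<close> by simp
      then show ?thesis using refl aiI by simp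
    qed
    have s1: "N i \<subseteq> N (b i)" and s3: "N (a i') \<subseteq> N i'" using bi bi' by auto
    have s23: "N (b i) \<subseteq> N i'" using c2 s3 by blast
    have "len (N i) (N i') = len (N i) (N (b i)) + len (N (b i)) (N i')"
      using add i biI i' s1 s23 by blast
    moreover have "len (N (b i)) (N i') = len (N (b i)) (N (a i')) + len (N (a i')) (N i')"
      using add biI aiI i' c2 s3 by blast
    ultimately have "len (N i) (N i') = nat (b i - i) + nat (a i' - b i) + nat (i' - a i')"
      using bi bi' c2 by simp
    also have "\<dots> = nat (i' - i)"
    proof -
      have "a i' \<le> i'" "i \<le> b i" using bi bi' by auto
      then show ?thesis using True by (simp add: nat_add_distrib[symmetric])
    qed
    finally show ?thesis using s1 s23 s3 by blast
  next
    case False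
    have "a i' \<le> a i"
    proof -
      have "a i' \<le> a i \<or> b i \<le> a i'" using bi bi' by blast
      then show ?thesis using False by simp
    qed
    moreover have "a i \<le> a i'"
    proof -
      have "a i \<le> a i' \<or> b i' \<le> a i" using bi bi' by blast
      then show ?thesis using bi bi' ii by linarith
    qed
    ultimately have aeq: "a i = a i'" by simp
    have "b i' \<le> b i"
    proof -
      have "b i \<le> a i' \<or> b i' \<le> b i" using bi bi' by blast
      then show ?thesis using False by simp
    qed
    moreover have "b i \<le> b i'"
    proof -
      have "b i' \<le> a i \<or> b i \<le> b i'" using bi bi' by blast
      then show ?thesis using bi bi' ii aeq by linarith
    qed
    ultimately have beq: "b i = b i'" by simp
    have "i \<notin> J"
    proof
      assume "i \<in> J" then have "a i = i" "b i = i" using brJ by auto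
      then show False using False aeq bi' ii by linarith
    qed
    moreover have "i' \<notin> J"
    proof
      assume "i' \<in> J" then have "a i' = i'" "b i' = i'" using brJ by auto
      then show False using False beq bi ii by linarith
    qed
    ultimately show ?thesis using same i i' ii aeq beq by blast
  qed
qed

context setting begin

lemma iso:
  assumes A: "Defs.lattice n OL A" and M: "Defs.lattice n OL M" and C: "Defs.lattice n OL C"
    and AM: "A \<subseteq> M" and MC: "M \<subseteq> C" and l1: "olength OL A M = 1"
    and dA: "dual A = sc s C"
  shows "sc s M \<subseteq> dual M" "olength OL (sc s M) (dual M) = olength OL A C - 2"
proof -
  obtain x0 where x0: "x0 \<in> M" "x0 \<notin> A" "\<forall>y\<in>M. \<exists>a\<in>A. \<exists>c\<in>OL. y = vadd a (vsc c x0)"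
    using len1_gen[OF A M AM l1] by blast
  define \<rho> where "\<rho> = \<pi> powi (- s)"
  have dA': "dual A = vsc \<rho> ` C" using dA unfolding sc_def \<rho>_def .
  have Mv: "M \<subseteq> vecs n" by (rule lattice_vecs[OF M])
  have Av: "A \<subseteq> vecs n" by (rule lattice_vecs[OF A])
  have x0v: "x0 \<in> vecs n" using x0 Mv by blast
  have inA: "vsc \<rho> x \<in> dual A" if "x \<in> M" for x using that MC dA' by blast
  have k1: "B (vsc \<rho> x) x0 \<in> OL" if x: "x \<in> M" for x
  proof -
    obtain a1 c1 where ac: "a1 \<in> A" "c1 \<in> OL" "x = vadd a1 (vsc c1 x0)" using x0(3) x by blast
    have a1v: "a1 \<in> vecs n" using ac Av by blast
    have "vsc \<rho> x = vadd (vsc \<rho> a1) (vsc (\<rho> * c1) x0)" using ac(3) by (simp add: vsc_vadd)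
    then have "B (vsc \<rho> x) x0 = B (vsc \<rho> a1) x0 + \<rho> * c1 * B x0 x0"
      using a1v x0v by (simp add: B_add_l B_sc_l)
    also have "\<dots> = B (vsc \<rho> a1) x0" using B_alt[OF x0v] by simp
    also have "\<dots> = - B x0 (vsc \<rho> a1)" using B_antisym[OF vecs_vsc[OF a1v] x0v] by simp
    also have "\<dots> = - B (vsc \<rho> x0) a1" using a1v x0v by (simp add: B_sc_l B_sc_r)
    finally have eq: "B (vsc \<rho> x) x0 = - B (vsc \<rho> x0) a1" .
    have "B (vsc \<rho> x0) a1 \<in> OL" using inA[OF x0(1)] ac(1) by (simp add: dual_iff)
    then show ?thesis using eq by simp
  qed
  show sub: "sc s M \<subseteq> dual M"
  proof
    fix z assume "z \<in> sc s M"
    then obtain x where x: "x \<in> M" "z = vsc \<rho> x" unfolding sc_def \<rho>_def by blast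
    have zv: "z \<in> vecs n" using x Mv by auto
    have "\<forall>y\<in>M. B z y \<in> OL"
    proof
      fix y assume "y \<in> M"
      then obtain a c where ac: "a \<in> A" "c \<in> OL" "y = vadd a (vsc c x0)" using x0(3) by blast
      have "B z y = B z a + c * B z x0" using ac Av x0v zv by (auto simp: B_add_r B_sc_r)
      moreover have "B z a \<in> OL" using inA[OF x(1)] ac(1) x(2) by (simp add: dual_iff)
      moreover have "B z x0 \<in> OL" using k1[OF x(1)] x(2) by simp
      ultimately show "B z y \<in> OL" using ac(2) by simp
    qed
    then show "z \<in> dual M" using zv by (simp add: dual_iff)
  qed
  have dM: "Defs.lattice n OL (dual M)" by (rule dual_lattice_props(1)[OF M])
  have dAl: "Defs.lattice n OL (dual A)" by (rule dual_lattice_props(1)[OF A])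
  have sA: "Defs.lattice n OL (sc s A)" by (rule sc_lattice[OF A])
  have sM: "Defs.lattice n OL (sc s M)" by (rule sc_lattice[OF M])
  have sC: "Defs.lattice n OL (sc s C)" by (rule sc_lattice[OF C])
  have d1: "dual M \<subseteq> dual A" "olength OL (dual M) (dual A) = 1" using len1_dual[OF A M AM l1] by simp_all
  have e1: "olength OL (sc s A) (sc s C) = olength OL (sc s A) (sc s M) + olength OL (sc s M) (sc s C)"
    by (rule olength_add[OF inreg_lat[OF sA sC] sc_mono[OF AM] sc_mono[OF MC] lat_om[OF sA] lat_om[OF sM] lat_om[OF sC]])
  have sMdA: "sc s M \<subseteq> dual A" using sub d1(1) by blast
  have e2: "olength OL (sc s M) (dual A) = olength OL (sc s M) (dual M) + olength OL (dual M) (dual A)"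
    by (rule olength_add[OF inreg_lat[OF sM dAl] sub d1(1) lat_om[OF sM] lat_om[OF dM] lat_om[OF dAl]])
  have "olength OL (sc s A) (sc s C) = olength OL A C" by (rule sc_olength)
  moreover have "olength OL (sc s A) (sc s M) = 1" using sc_olength l1 by simp
  ultimately show "olength OL (sc s M) (dual M) = olength OL A C - 2"
    using e1 e2 d1(2) dA by simp
qed

end

context setting begin

lemma per_int:
  assumes Iper: "\<And>i t. i \<in> I \<Longrightarrow> i + 2 * int n * t \<in> I"
    and Nper: "\<forall>i\<in>I. N (i + 2 * int n) = vsc (inverse \<pi>) ` N i" and i: "i \<in> I"
  shows "N (i + 2 * int n * t) = sc t (N i)"
proof -
  have nat: "N (i' + 2 * int n * int k) = sc (int k) (N i')" if i': "i' \<in> I" for i' k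
  proof (induction k)
    case 0 then show ?case by simp
  next
    case (Suc k)
    have mem: "i' + 2 * int n * int k \<in> I" using Iper[OF i'] by blast
    have "N (i' + 2 * int n * int (Suc k)) = N ((i' + 2 * int n * int k) + 2 * int n)"
      by (simp add: algebra_simps)
    also have "\<dots> = vsc (inverse \<pi>) ` N (i' + 2 * int n * int k)" using Nper mem by blast
    also have "\<dots> = sc (int k + 1) (N i')" using Suc sc_inv_pi by simp
    finally show ?case by (simp add: ac_simps)
  qed
  show ?thesis
  proof (cases "t \<ge> 0")
    case True
    then have "t = int (nat t)" by simp
    then show ?thesis using nat[OF i, of "nat t"] by simp
  next
    case False
    define k where "k = nat (- t)"
    have t: "t = - int k" using False k_def by simp
    define i' where "i' = i + 2 * int n * t"
    have i'I: "i' \<in> I" unfolding i'_def using Iper[OF i] .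
    have "i = i' + 2 * int n * int k" unfolding i'_def t by simp
    then have "N i = sc (int k) (N i')" using nat[OF i'I, of k] by simp
    then have "sc t (N i) = sc (t + int k) (N i')" by (simp add: sc_sc)
    then show ?thesis using t i'_def by simp
  qed
qed

end

locale mainctx = setting +
  fixes Jbar :: "int set" and k :: int and Mc :: "int \<Rightarrow> (nat \<Rightarrow> 'a) set"
  assumes Jne: "Jbar \<noteq> {}" and Jsym: "symmetric_type n Jbar"
    and kJ: "k \<in> invimg n Jbar" and k1J: "k + 1 \<notin> invimg n Jbar"
    and McX: "Mc \<in> XG n OL \<pi> B Jbar"
begin

abbreviation m2 :: int where "m2 \<equiv> 2 * int n"
abbreviation J :: "int set" where "J \<equiv> invimg n Jbar"

lemma m2pos: "m2 > 0" using n1 by simp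

lemma mod_eq_ex: "i mod m2 = c mod m2 \<longleftrightarrow> (\<exists>t. i = c + m2 * t)"
proof
  assume "i mod m2 = c mod m2"
  then have "m2 dvd i - c" by (simp add: mod_eq_dvd_iff)
  then obtain t where "i - c = m2 * t" by (elim dvdE)
  then show "\<exists>t. i = c + m2 * t" by (intro exI[of _ t]) simp
next
  assume "\<exists>t. i = c + m2 * t"
  then obtain t where "i = c + m2 * t" by blast
  then show "i mod m2 = c mod m2" by simp
qed

lemma invimg_per: "i \<in> invimg n X \<Longrightarrow> i + m2 * t \<in> invimg n X"
  unfolding invimg_def by simp

lemma invimg_per_iff: "i + m2 * t \<in> invimg n X \<longleftrightarrow> i \<in> invimg n X"
  unfolding invimg_def by simp

lemma J_neg: "i \<in> J \<Longrightarrow> - i \<in> J"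
proof -
  assume "i \<in> J"
  then have "i mod m2 \<in> Jbar" unfolding invimg_def by simp
  then have "(- (i mod m2)) mod m2 \<in> Jbar" using Jsym unfolding symmetric_type_def by blast
  moreover have "(- (i mod m2)) mod m2 = (- i) mod m2" by (simp add: mod_minus_eq)
  ultimately show "- i \<in> J" unfolding invimg_def by simp
qed

lemma McXG:
  shows "\<forall>i. i \<notin> J \<longrightarrow> Mc i = {}" "\<forall>i\<in>J. Defs.lattice n OL (Mc i)"
    "\<forall>i\<in>J. \<forall>i'\<in>J. i < i' \<longrightarrow> Mc i \<subseteq> Mc i' \<and> olength OL (Mc i) (Mc i') = nat (i' - i)"
    "\<forall>i\<in>J. Mc (i + m2) = vsc (inverse \<pi>) ` Mc i"
    "\<exists>d::int. \<forall>i\<in>J. dual (Mc i) = Mc (- i + m2 * d)"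
  using McX unfolding XG_def Let_def by auto

definition d :: int where "d = (SOME d. \<forall>i\<in>J. dual (Mc i) = Mc (- i + m2 * d))"

lemma Mc_d: "i \<in> J \<Longrightarrow> dual (Mc i) = Mc (- i + m2 * d)"
  using someI_ex[OF McXG(5)] unfolding d_def by blast

lemma Mc_lat: "i \<in> J \<Longrightarrow> Defs.lattice n OL (Mc i)" using McXG(2) by blast
lemma Mc_ch: "i \<in> J \<Longrightarrow> i' \<in> J \<Longrightarrow> i < i' \<Longrightarrow> Mc i \<subseteq> Mc i' \<and> olength OL (Mc i) (Mc i') = nat (i' - i)"
  using McXG(3) by blast
lemma Mc_out: "i \<notin> J \<Longrightarrow> Mc i = {}" using McXG(1) by blast

lemma Mc_per: "i \<in> J \<Longrightarrow> Mc (i + m2 * t) = sc t (Mc i)"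
  using per_int[of J Mc i t] invimg_per McXG(4) by blast

lemma Mc_shift_eq: assumes "i \<in> J" "Mc (i + m2 * t) = Mc i" shows "t = 0"
proof (rule ccontr)
  assume t: "t \<noteq> 0"
  have iJ': "i + m2 * t \<in> J" using invimg_per[OF assms(1)] .
  have om: "omodule OL (Mc i)" using lat_om[OF Mc_lat[OF assms(1)]] .
  show False
  proof (cases "t > 0")
    case True
    then have "i < i + m2 * t" using m2pos by simp
    then have "olength OL (Mc i) (Mc (i + m2 * t)) = nat (m2 * t)" using Mc_ch[OF assms(1) iJ'] by simp
    moreover have "nat (m2 * t) > 0" using True m2pos by simp
    ultimately show False using assms(2) olength_refl[OF om] by simp
  next
    case False
    then have "i + m2 * t < i" using t m2pos by (simp add: mult_pos_neg)
    then have "olength OL (Mc (i + m2 * t)) (Mc i) = nat (- (m2 * t))" using Mc_ch[OF iJ' assms(1)] by simp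
    moreover have "nat (- (m2 * t)) > 0" using False t m2pos by (simp add: mult_pos_neg)
    ultimately show False using assms(2) olength_refl[OF om] by simp
  qed
qed

definition l :: int where "l = (LEAST l. l \<in> J \<and> k < l)"

lemma l_props: "l \<in> J" "k < l" "\<And>x. x \<in> J \<Longrightarrow> k < x \<Longrightarrow> l \<le> x"
proof -
  have "k + m2 * 1 \<in> J" using invimg_per[OF kJ] .
  moreover have "k < k + m2 * 1" using m2pos by simp
  ultimately have "l \<in> J \<and> k < l \<and> (\<forall>x\<in>J. k < x \<longrightarrow> l \<le> x)"
    unfolding l_def by (rule int_least_above)
  then show "l \<in> J" "k < l" "\<And>x. x \<in> J \<Longrightarrow> k < x \<Longrightarrow> l \<le> x" by auto
qed

lemma l_ge: "k + 2 \<le> l"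
proof -
  have "l \<noteq> k + 1" using l_props(1) k1J by auto
  then show ?thesis using l_props(2) by simp
qed

lemma gapJ: "x \<in> J \<Longrightarrow> x \<le> k + m2 * t \<or> l + m2 * t \<le> x"
proof -
  assume x: "x \<in> J"
  have "x + m2 * (- t) \<in> J" using invimg_per[OF x] .
  then have "x - m2 * t \<in> J" by simp
  then have "x - m2 * t \<le> k \<or> l \<le> x - m2 * t" using l_props(3) by force
  then show ?thesis by linarith
qed

definition sg :: "int \<Rightarrow> int" where "sg i = - i + m2 * d"

lemma sg_J: "i \<in> J \<Longrightarrow> sg i \<in> J"
  unfolding sg_def using J_neg invimg_per by blast

lemma gapD: "x \<in> J \<Longrightarrow> x \<le> sg l + m2 * t \<or> sg k + m2 * t \<le> x"
proof (rule ccontr)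
  assume x: "x \<in> J" and "\<not> (x \<le> sg l + m2 * t \<or> sg k + m2 * t \<le> x)"
  then have lt: "sg l + m2 * t < x" "x < sg k + m2 * t" by auto
  have "x + m2 * (- t) \<in> J" using invimg_per[OF x] .
  then have "sg (x - m2 * t) \<in> J" using sg_J by simp
  moreover have "k < sg (x - m2 * t)" "sg (x - m2 * t) < l" using lt unfolding sg_def by auto
  ultimately show False using gapJ[of "sg (x - m2 * t)" 0] by simp
qed

definition jj :: int where "jj = - (k + 1) + m2 * d"

lemma jj_sg: "jj = sg k - 1" unfolding jj_def sg_def by simp

abbreviation Ibar :: "int set" where "Ibar \<equiv> Jbar \<union> {(k + 1) mod m2, (- (k + 1)) mod m2}"
abbreviation I :: "int set" where "I \<equiv> invimg n Ibar"

lemma I_iff: "i \<in> I \<longleftrightarrow> i \<in> J \<or> (\<exists>t. i = k + 1 + m2 * t) \<or> (\<exists>t. i = jj + m2 * t)"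
proof -
  have "(- (k + 1)) mod m2 = jj mod m2" unfolding jj_def by simp
  then have "i \<in> I \<longleftrightarrow> i \<in> J \<or> i mod m2 = (k + 1) mod m2 \<or> i mod m2 = jj mod m2"
    unfolding invimg_def by auto
  then show ?thesis by (simp add: mod_eq_ex)
qed

lemma JI: "J \<subseteq> I" unfolding invimg_def by auto

lemma K1_notJ: "i = k + 1 + m2 * t \<Longrightarrow> i \<notin> J"
  using invimg_per_iff[of "k + 1" t Jbar] k1J by simp

lemma K2_notJ: "i = jj + m2 * t \<Longrightarrow> i \<notin> J"
proof
  assume i: "i = jj + m2 * t" and "i \<in> J"
  have "i = - (k + 1) + m2 * (d + t)" using i unfolding jj_def by (simp add: algebra_simps)
  then have "- (k + 1) + m2 * (d + t) \<in> J" using \<open>i \<in> J\<close> by simp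
  then have "- (k + 1) \<in> J" using invimg_per_iff by blast
  then have "- (- (k + 1)) \<in> J" by (rule J_neg)
  then have "k + 1 \<in> J" by (simp add: add.commute)
  then show False using k1J by simp
qed

end

context mainctx begin

lemma A_lat: "Defs.lattice n OL (Mc k)" using Mc_lat[OF kJ] .
lemma C_lat: "Defs.lattice n OL (Mc l)" using Mc_lat[OF l_props(1)] .
lemma AC: "Mc k \<subseteq> Mc l" "olength OL (Mc k) (Mc l) = nat (l - k)"
  using Mc_ch[OF kJ l_props(1) l_props(2)] by auto
lemma dA: "dual (Mc k) = Mc (sg k)" using Mc_d[OF kJ] unfolding sg_def .
lemma dC: "dual (Mc l) = Mc (sg l)" using Mc_d[OF l_props(1)] unfolding sg_def .
lemma dAC: "olength OL (Mc (sg l)) (Mc (sg k)) = nat (l - k)" "Mc (sg l) \<subseteq> Mc (sg k)"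
proof -
  have "sg l < sg k" using l_props(2) unfolding sg_def by simp
  then show "olength OL (Mc (sg l)) (Mc (sg k)) = nat (l - k)" "Mc (sg l) \<subseteq> Mc (sg k)"
    using Mc_ch[OF sg_J[OF l_props(1)] sg_J[OF kJ]] unfolding sg_def by auto
qed

definition tgt :: "(nat \<Rightarrow> 'a) set \<Rightarrow> bool" where
  "tgt M \<longleftrightarrow> Defs.lattice n OL M \<and> Mc k \<subseteq> M \<and> M \<subseteq> Mc l \<and> vsc \<pi> ` M \<subseteq> Mc k \<and> olength OL (Mc k) M = 1"

definition fib :: "(int \<Rightarrow> (nat \<Rightarrow> 'a) set) \<Rightarrow> bool" where
  "fib N \<longleftrightarrow> N \<in> XG n OL \<pi> B Ibar \<and> restrict_chain J N = Mc"

lemma XGI: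
  assumes "N \<in> XG n OL \<pi> B Ibar"
  shows "\<forall>i. i \<notin> I \<longrightarrow> N i = {}" "\<forall>i\<in>I. Defs.lattice n OL (N i)"
    "\<forall>i\<in>I. \<forall>i'\<in>I. i < i' \<longrightarrow> N i \<subseteq> N i' \<and> olength OL (N i) (N i') = nat (i' - i)"
    "\<forall>i\<in>I. N (i + m2) = vsc (inverse \<pi>) ` N i"
    "\<exists>d::int. \<forall>i\<in>I. dual (N i) = N (- i + m2 * d)"
  using assms unfolding XG_def Let_def by auto

lemma fib_J: assumes "fib N" "i \<in> J" shows "N i = Mc i"
proof -
  have "restrict_chain J N i = Mc i" using assms(1) unfolding fib_def by simp
  then show ?thesis using assms(2) by (simp add: restrict_chain_def)
qed

lemma k1I: "k + 1 \<in> I"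
proof -
  have "k + 1 = k + 1 + m2 * 0" by simp
  then show ?thesis using I_iff[of "k+1"] by blast
qed

lemma fwd: assumes "fib N" shows "tgt (N (k + 1))"
proof -
  have X: "N \<in> XG n OL \<pi> B Ibar" using assms unfolding fib_def by blast
  have kI: "k \<in> I" and lI: "l \<in> I" using JI kJ l_props(1) by auto
  have Nk: "N k = Mc k" and Nl: "N l = Mc l" using fib_J[OF assms] kJ l_props(1) by auto
  have lat: "Defs.lattice n OL (N (k + 1))" using XGI(2)[OF X] k1I by blast
  have c1: "N k \<subseteq> N (k + 1) \<and> olength OL (N k) (N (k + 1)) = nat (k + 1 - k)"
    using XGI(3)[OF X] kI k1I by simp
  have "k + 1 < l" using l_ge by simp
  then have c2: "N (k + 1) \<subseteq> N l" using XGI(3)[OF X] k1I lI by blast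
  have o1: "olength OL (Mc k) (N (k + 1)) = 1" using c1 Nk by simp
  have "vsc \<pi> ` N (k + 1) \<subseteq> Mc k" using len1_pi[OF A_lat lat] c1 Nk o1 by simp
  then show ?thesis unfolding tgt_def using lat c1 c2 Nk Nl o1 by simp
qed

lemma fib_d: assumes "fib N" shows "\<forall>i\<in>I. dual (N i) = N (- i + m2 * d)"
proof -
  have X: "N \<in> XG n OL \<pi> B Ibar" using assms unfolding fib_def by blast
  obtain d1 where d1: "\<forall>i\<in>I. dual (N i) = N (- i + m2 * d1)" using XGI(5)[OF X] by blast
  have kI: "k \<in> I" using JI kJ by auto
  have e: "- k + m2 * d1 = sg k + m2 * (d1 - d)" unfolding sg_def by (simp add: algebra_simps)
  have mem: "sg k + m2 * (d1 - d) \<in> J" using invimg_per[OF sg_J[OF kJ]] .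
  have "dual (N k) = N (- k + m2 * d1)" using d1 kI by blast
  then have "dual (Mc k) = N (- k + m2 * d1)" using fib_J[OF assms kJ] by simp
  also have "\<dots> = Mc (sg k + m2 * (d1 - d))" using e fib_J[OF assms mem] by simp
  finally have "Mc (sg k + m2 * (d1 - d)) = Mc (sg k)" using dA by simp
  then have "d1 - d = 0" using Mc_shift_eq[OF sg_J[OF kJ]] by blast
  then show ?thesis using d1 by simp
qed

lemma fib_per: assumes "fib N" "i \<in> I" shows "N (i + m2 * t) = sc t (N i)"
proof -
  have X: "N \<in> XG n OL \<pi> B Ibar" using assms unfolding fib_def by blast
  show ?thesis using per_int[of I N i t] invimg_per XGI(4)[OF X] assms(2) by blast
qed

lemma inj: assumes "fib N" "fib N'" "N (k + 1) = N' (k + 1)" shows "N = N'"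
proof
  fix i
  have X: "N \<in> XG n OL \<pi> B Ibar" and X': "N' \<in> XG n OL \<pi> B Ibar" using assms unfolding fib_def by auto
  have "jj = jj + m2 * 0" by simp
  then have jjI: "jj \<in> I" using I_iff[of jj] by blast
  have jjeq: "jj = - (k + 1) + m2 * d" unfolding jj_def ..
  have Njj: "N jj = N' jj"
  proof -
    have "N jj = dual (N (k + 1))" using fib_d[OF assms(1), rule_format, OF k1I] unfolding jj_def by simp
    also have "\<dots> = dual (N' (k + 1))" using assms(3) by simp
    also have "\<dots> = N' jj" using fib_d[OF assms(2), rule_format, OF k1I] unfolding jj_def by simp
    finally show ?thesis .
  qed
  show "N i = N' i"
  proof (cases "i \<in> I")
    case False
    then show ?thesis using XGI(1)[OF X] XGI(1)[OF X'] by simp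
  next
    case True
    then consider (a) "i \<in> J" | (b) t where "i = k + 1 + m2 * t" | (c) t where "i = jj + m2 * t"
      using I_iff by blast
    then show ?thesis
    proof cases
      case a then show ?thesis using fib_J[OF assms(1) a] fib_J[OF assms(2) a] by simp
    next
      case b then show ?thesis using fib_per[OF assms(1) k1I] fib_per[OF assms(2) k1I] assms(3) by simp
    next
      case c then show ?thesis using fib_per[OF assms(1) jjI] fib_per[OF assms(2) jjI] Njj by simp
    qed
  qed
qed

end

context mainctx begin

lemma tgtD: assumes "tgt M"
  shows "Defs.lattice n OL M" "Mc k \<subseteq> M" "M \<subseteq> Mc l" "olength OL (Mc k) M = 1"
  using assms unfolding tgt_def by auto

lemma tM_a: assumes "tgt M" shows "olength OL M (Mc l) = nat (l - k) - 1"
proof -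
  note t = tgtD[OF assms]
  have "olength OL (Mc k) (Mc l) = olength OL (Mc k) M + olength OL M (Mc l)"
    by (rule olength_add[OF inreg_lat[OF A_lat C_lat] t(2) t(3) lat_om[OF A_lat] lat_om[OF t(1)] lat_om[OF C_lat]])
  then show ?thesis using AC(2) t(4) by simp
qed

lemma tM_b: assumes "tgt M"
  shows "dual (Mc l) \<subseteq> dual M" "dual M \<subseteq> dual (Mc k)" "olength OL (dual M) (dual (Mc k)) = 1"
    "olength OL (dual (Mc l)) (dual M) = nat (l - k) - 1"
proof -
  note t = tgtD[OF assms]
  show s1: "dual (Mc l) \<subseteq> dual M" using t(3) by (rule dual_anti)
  show s2: "dual M \<subseteq> dual (Mc k)" and o1: "olength OL (dual M) (dual (Mc k)) = 1"
    using len1_dual[OF A_lat t(1) t(2) t(4)] by auto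
  have lC: "Defs.lattice n OL (dual (Mc l))" using dual_lattice_props(1)[OF C_lat] .
  have lA: "Defs.lattice n OL (dual (Mc k))" using dual_lattice_props(1)[OF A_lat] .
  have lM: "Defs.lattice n OL (dual M)" using dual_lattice_props(1)[OF t(1)] .
  have "olength OL (dual (Mc l)) (dual (Mc k)) = olength OL (dual (Mc l)) (dual M) + olength OL (dual M) (dual (Mc k))"
    by (rule olength_add[OF inreg_lat[OF lC lA] s1 s2 lat_om[OF lC] lat_om[OF lM] lat_om[OF lA]])
  then show "olength OL (dual (Mc l)) (dual M) = nat (l - k) - 1" using dAC(1) dA dC o1 by simp
qed

lemma tM_iso: assumes "tgt M" "sg k = l + m2 * s"
  shows "sc s M \<subseteq> dual M" "olength OL (sc s M) (dual M) = nat (l - k) - 2"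
proof -
  note t = tgtD[OF assms(1)]
  have "dual (Mc k) = sc s (Mc l)" using dA assms(2) Mc_per[OF l_props(1)] by simp
  from iso[OF A_lat t(1) C_lat t(2) t(3) t(4) this]
  show "sc s M \<subseteq> dual M" "olength OL (sc s M) (dual M) = nat (l - k) - 2" using AC(2) by auto
qed

lemma tM_lag: assumes "tgt M" "jj = k + 1 + m2 * t0" shows "dual M = sc t0 M"
proof -
  note t = tgtD[OF assms(1)]
  have sk: "sg k = (k + 2) + m2 * t0" using jj_sg assms(2) by simp
  then have "(k + 2) + m2 * t0 \<in> J" using sg_J[OF kJ] by simp
  then have "k + 2 \<in> J" using invimg_per_iff by blast
  then have "l \<le> k + 2" using l_props(3) by simp
  then have lk: "l = k + 2" using l_ge by simp
  then have "sg k = l + m2 * t0" using sk by simp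
  note i = tM_iso[OF assms(1) this]
  have l1: "Defs.lattice n OL (sc t0 M)" using sc_lattice[OF t(1)] .
  have l2: "Defs.lattice n OL (dual M)" using dual_lattice_props(1)[OF t(1)] .
  have "sc t0 M = dual M"
    by (rule olength_zero_eq[OF inreg_lat[OF l1 l2] i(1) lat_om[OF l1] lat_om[OF l2]]) (use i(2) lk in simp)
  then show ?thesis by simp
qed

definition Nof :: "(nat \<Rightarrow> 'a) set \<Rightarrow> int \<Rightarrow> (nat \<Rightarrow> 'a) set" where
  "Nof M i = (if i \<in> J then Mc i else if (\<exists>t. i = k + 1 + m2 * t) then sc ((i - (k + 1)) div m2) M
     else if (\<exists>t. i = jj + m2 * t) then sc ((i - jj) div m2) (dual M) else {})"

lemma Nof_J: "i \<in> J \<Longrightarrow> Nof M i = Mc i" unfolding Nof_def by simp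

lemma Nof_K1: "Nof M (k + 1 + m2 * t) = sc t M"
proof -
  have "k + 1 + m2 * t \<notin> J" using K1_notJ by blast
  moreover have "(k + 1 + m2 * t - (k + 1)) div m2 = t" using m2pos by simp
  ultimately show ?thesis unfolding Nof_def by auto
qed

lemma Nof_K2: "\<not> (\<exists>t'. jj + m2 * t = k + 1 + m2 * t') \<Longrightarrow> Nof M (jj + m2 * t) = sc t (dual M)"
proof -
  assume nk: "\<not> (\<exists>t'. jj + m2 * t = k + 1 + m2 * t')"
  have "jj + m2 * t \<notin> J" using K2_notJ by blast
  moreover have "(jj + m2 * t - jj) div m2 = t" using m2pos by simp
  ultimately show ?thesis using nk unfolding Nof_def by auto
qed

lemma Nof_out: "i \<notin> I \<Longrightarrow> Nof M i = {}"
  unfolding Nof_def using I_iff by auto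

lemma I_cases:
  assumes "i \<in> I"
  obtains (J) "i \<in> J" | (K1) t where "i = k + 1 + m2 * t"
    | (K2) t where "i = jj + m2 * t" "\<not> (\<exists>t'. i = k + 1 + m2 * t')"
  using assms I_iff by blast

lemma Nof_lat: assumes "tgt M" "i \<in> I" shows "Defs.lattice n OL (Nof M i)"
  using assms(2)
proof (cases rule: I_cases)
  case J then show ?thesis using Mc_lat Nof_J by simp
next
  case (K1 t) then show ?thesis using Nof_K1 sc_lattice tgtD(1)[OF assms(1)] by simp
next
  case (K2 t) then show ?thesis using Nof_K2 sc_lattice dual_lattice_props(1)[OF tgtD(1)[OF assms(1)]] by simp
qed

lemma Nof_per: assumes "i \<in> I" shows "Nof M (i + m2) = vsc (inverse \<pi>) ` Nof M i"
  using assms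
proof (cases rule: I_cases)
  case J
  then have "i + m2 \<in> J" using invimg_per[of i Jbar 1] by simp
  then show ?thesis using J McXG(4) Nof_J by simp
next
  case (K1 t)
  then have e: "i + m2 = k + 1 + m2 * (t + 1)" by (simp add: algebra_simps)
  have "Nof M (i + m2) = sc (t + 1) M" unfolding e by (rule Nof_K1)
  also have "\<dots> = vsc (inverse \<pi>) ` sc t M" using sc_inv_pi by simp
  also have "\<dots> = vsc (inverse \<pi>) ` Nof M i" using K1 Nof_K1 by simp
  finally show ?thesis .
next
  case (K2 t)
  have e: "i + m2 = jj + m2 * (t + 1)" using K2 by (simp add: algebra_simps)
  have "\<not> (\<exists>t'. jj + m2 * (t + 1) = k + 1 + m2 * t')"
  proof
    assume "\<exists>t'. jj + m2 * (t + 1) = k + 1 + m2 * t'"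
    then obtain t' where "jj + m2 * (t + 1) = k + 1 + m2 * t'" by blast
    then have "i = k + 1 + m2 * (t' - 1)" using K2 by (simp add: algebra_simps)
    then show False using K2 by blast
  qed
  then have "Nof M (i + m2) = sc (t + 1) (dual M)" unfolding e by (rule Nof_K2)
  also have "\<dots> = vsc (inverse \<pi>) ` sc t (dual M)" using sc_inv_pi by simp
  also have "\<dots> = vsc (inverse \<pi>) ` Nof M i" using K2 Nof_K2 by simp
  finally show ?thesis .
qed

lemma Nof_dual: assumes "tgt M" "i \<in> I" shows "dual (Nof M i) = Nof M (- i + m2 * d)"
  using assms(2)
proof (cases rule: I_cases)
  case J
  then have "sg i \<in> J" by (rule sg_J)
  then show ?thesis using J Mc_d Nof_J unfolding sg_def by simp
next
  case (K1 t)
  note t = tgtD[OF assms(1)]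
  have Mv: "M \<subseteq> vecs n" using lattice_vecs[OF t(1)] .
  have lhs: "dual (Nof M i) = sc (- t) (dual M)" using K1 Nof_K1 sc_dual[OF Mv] by simp
  have e: "- i + m2 * d = jj + m2 * (- t)" using K1 unfolding jj_def by (simp add: algebra_simps)
  show ?thesis
  proof (cases "\<exists>t0. jj = k + 1 + m2 * t0")
    case True
    then obtain t0 where t0: "jj = k + 1 + m2 * t0" by blast
    have "- i + m2 * d = k + 1 + m2 * (t0 - t)" using e t0 by (simp add: algebra_simps)
    then have "Nof M (- i + m2 * d) = sc (t0 - t) M" using Nof_K1 by simp
    moreover have "dual M = sc t0 M" using tM_lag[OF assms(1) t0] .
    ultimately show ?thesis using lhs by (simp add: sc_sc)
  next
    case False
    have "\<not> (\<exists>t'. jj + m2 * (- t) = k + 1 + m2 * t')"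
    proof
      assume "\<exists>t'. jj + m2 * (- t) = k + 1 + m2 * t'"
      then obtain t' where "jj + m2 * (- t) = k + 1 + m2 * t'" by blast
      then have "jj = k + 1 + m2 * (t' + t)" by (simp add: algebra_simps)
      then show False using False by blast
    qed
    then have "Nof M (jj + m2 * (- t)) = sc (- t) (dual M)" by (rule Nof_K2)
    then show ?thesis using lhs e by simp
  qed
next
  case (K2 t)
  note tt = tgtD[OF assms(1)]
  have dMv: "dual M \<subseteq> vecs n" using lattice_vecs[OF dual_lattice_props(1)[OF tt(1)]] .
  have "dual (Nof M i) = sc (- t) (dual (dual M))" using K2 Nof_K2 sc_dual[OF dMv] by simp
  then have lhs: "dual (Nof M i) = sc (- t) M" using dual_lattice_props(2)[OF tt(1)] by simp
  have e: "- i + m2 * d = k + 1 + m2 * (- t)" using K2 unfolding jj_def by (simp add: algebra_simps)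
  have "Nof M (k + 1 + m2 * (- t)) = sc (- t) M" by (rule Nof_K1)
  then show ?thesis using lhs e by simp
qed

end

context mainctx begin

lemma Nof_chain:
  assumes tM: "tgt M"
  shows "\<forall>i\<in>I. \<forall>i'\<in>I. i < i' \<longrightarrow> Nof M i \<subseteq> Nof M i' \<and> olength OL (Nof M i) (Nof M i') = nat (i' - i)"
proof -
  note t = tgtD[OF tM]
  define a where "a = (\<lambda>i. if i \<in> J then i else if (\<exists>t. i = k + 1 + m2 * t) then i - 1 else i - (l - k - 1))"
  define b where "b = (\<lambda>i. if i \<in> J then i else if (\<exists>t. i = k + 1 + m2 * t) then i + (l - k - 1) else i + 1)"
  have lk: "k + 2 \<le> l" by (rule l_ge)
  have br: "\<forall>i\<in>I. a i \<in> J \<and> b i \<in> J \<and> a i \<le> i \<and> i \<le> b i \<and> (\<forall>x\<in>J. x \<le> a i \<or> b i \<le> x) \<and>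
              Nof M (a i) \<subseteq> Nof M i \<and> Nof M i \<subseteq> Nof M (b i) \<and>
              olength OL (Nof M (a i)) (Nof M i) = nat (i - a i) \<and>
              olength OL (Nof M i) (Nof M (b i)) = nat (b i - i)"
  proof
    fix i assume "i \<in> I"
    then show "a i \<in> J \<and> b i \<in> J \<and> a i \<le> i \<and> i \<le> b i \<and> (\<forall>x\<in>J. x \<le> a i \<or> b i \<le> x) \<and>
              Nof M (a i) \<subseteq> Nof M i \<and> Nof M i \<subseteq> Nof M (b i) \<and>
              olength OL (Nof M (a i)) (Nof M i) = nat (i - a i) \<and>
              olength OL (Nof M i) (Nof M (b i)) = nat (b i - i)"
    proof (cases rule: I_cases)
      case J
      have ab: "a i = i" "b i = i" using J unfolding a_def b_def by auto
      have "olength OL (Nof M i) (Nof M i) = 0"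
        using olength_refl[OF lat_om[OF Mc_lat[OF J]]] Nof_J[OF J] by simp
      then show ?thesis using ab J by auto
    next
      case (K1 t)
      have nJ: "i \<notin> J" using K1 K1_notJ by blast
      have ab: "a i = k + m2 * t" "b i = l + m2 * t" using K1 nJ unfolding a_def b_def by auto
      have aJ: "k + m2 * t \<in> J" using invimg_per[OF kJ] .
      have bJ: "l + m2 * t \<in> J" using invimg_per[OF l_props(1)] .
      have Na: "Nof M (k + m2 * t) = sc t (Mc k)" using Nof_J[OF aJ] Mc_per[OF kJ] by simp
      have Nb: "Nof M (l + m2 * t) = sc t (Mc l)" using Nof_J[OF bJ] Mc_per[OF l_props(1)] by simp
      have Ni: "Nof M i = sc t M" using K1 Nof_K1 by simp
      have gap: "\<forall>x\<in>J. x \<le> k + m2 * t \<or> l + m2 * t \<le> x" using gapJ by blast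
      have o1: "olength OL (sc t (Mc k)) (sc t M) = 1" using sc_olength t(4) by simp
      have o2: "olength OL (sc t M) (sc t (Mc l)) = nat (l - k) - 1" using sc_olength tM_a[OF tM] by simp
      have n1: "nat (i - (k + m2 * t)) = 1" using K1 by simp
      have n2: "nat (l + m2 * t - i) = nat (l - k) - 1" using K1 lk by simp
      show ?thesis unfolding ab Na Nb Ni using aJ bJ K1 lk gap sc_mono[OF t(2)] sc_mono[OF t(3)] o1 o2 n1 n2
        by simp
    next
      case (K2 t)
      have nJ: "i \<notin> J" using K2 K2_notJ by blast
      have ab: "a i = sg l + m2 * t" "b i = sg k + m2 * t"
        using K2 nJ l_props(2) unfolding a_def b_def jj_sg by (auto simp: sg_def)
      have aJ: "sg l + m2 * t \<in> J" using invimg_per[OF sg_J[OF l_props(1)]] .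
      have bJ: "sg k + m2 * t \<in> J" using invimg_per[OF sg_J[OF kJ]] .
      have Na: "Nof M (sg l + m2 * t) = sc t (dual (Mc l))"
        using Nof_J[OF aJ] Mc_per[OF sg_J[OF l_props(1)]] dC by simp
      have Nb: "Nof M (sg k + m2 * t) = sc t (dual (Mc k))"
        using Nof_J[OF bJ] Mc_per[OF sg_J[OF kJ]] dA by simp
      have Ni: "Nof M i = sc t (dual M)" using K2 Nof_K2 by simp
      have gap: "\<forall>x\<in>J. x \<le> sg l + m2 * t \<or> sg k + m2 * t \<le> x" using gapD by blast
      note bb = tM_b[OF tM]
      have o1: "olength OL (sc t (dual (Mc l))) (sc t (dual M)) = nat (l - k) - 1" using sc_olength bb(4) by simp
      have o2: "olength OL (sc t (dual M)) (sc t (dual (Mc k))) = 1" using sc_olength bb(3) by simp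
      have n1: "nat (i - (sg l + m2 * t)) = nat (l - k) - 1" using K2 lk unfolding jj_sg sg_def by simp
      have n2: "nat (sg k + m2 * t - i) = 1" using K2 unfolding jj_sg by simp
      have ord: "sg l + m2 * t \<le> i" "i \<le> sg k + m2 * t" using K2 lk unfolding jj_sg sg_def by simp_all
      show ?thesis unfolding ab Na Nb Ni using aJ bJ ord gap sc_mono[OF bb(1)] sc_mono[OF bb(2)] o1 o2 n1 n2
        by simp
    qed
  qed
  have brJ: "\<forall>i\<in>J. a i = i \<and> b i = i" unfolding a_def b_def by simp
  have Jch: "\<forall>i\<in>J. \<forall>i'\<in>J. i < i' \<longrightarrow> Nof M i \<subseteq> Nof M i' \<and> olength OL (Nof M i) (Nof M i') = nat (i' - i)"
    using Mc_ch Nof_J by simp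
  have refl: "\<forall>i\<in>I. olength OL (Nof M i) (Nof M i) = 0"
    using olength_refl lat_om Nof_lat[OF tM] by blast
  have add: "\<forall>x\<in>I. \<forall>y\<in>I. \<forall>z\<in>I. Nof M x \<subseteq> Nof M y \<longrightarrow> Nof M y \<subseteq> Nof M z \<longrightarrow>
      olength OL (Nof M x) (Nof M z) = olength OL (Nof M x) (Nof M y) + olength OL (Nof M y) (Nof M z)"
  proof (intro ballI impI)
    fix x y z assume xyz: "x \<in> I" "y \<in> I" "z \<in> I" and s: "Nof M x \<subseteq> Nof M y" "Nof M y \<subseteq> Nof M z"
    note L = Nof_lat[OF tM xyz(1)] Nof_lat[OF tM xyz(2)] Nof_lat[OF tM xyz(3)]
    show "olength OL (Nof M x) (Nof M z) = olength OL (Nof M x) (Nof M y) + olength OL (Nof M y) (Nof M z)"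
      by (rule olength_add[OF inreg_lat[OF L(1) L(3)] s lat_om[OF L(1)] lat_om[OF L(2)] lat_om[OF L(3)]])
  qed
  have same: "\<forall>i\<in>I. \<forall>i'\<in>I. i < i' \<longrightarrow> i \<notin> J \<longrightarrow> i' \<notin> J \<longrightarrow> a i = a i' \<longrightarrow> b i = b i' \<longrightarrow>
              Nof M i \<subseteq> Nof M i' \<and> olength OL (Nof M i) (Nof M i') = nat (i' - i)"
  proof (intro ballI impI)
    fix i i' assume i: "i \<in> I" and i': "i' \<in> I" and ii: "i < i'" and nJ: "i \<notin> J" and nJ': "i' \<notin> J"
      and aeq: "a i = a i'" and beq: "b i = b i'"
    show "Nof M i \<subseteq> Nof M i' \<and> olength OL (Nof M i) (Nof M i') = nat (i' - i)"
      using i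
    proof (cases rule: I_cases)
      case J then show ?thesis using nJ by simp
    next
      case (K1 t)
      have ai: "a i = i - 1" using K1 nJ unfolding a_def by auto
      show ?thesis using i'
      proof (cases rule: I_cases)
        case J then show ?thesis using nJ' by simp
      next
        case (K1 t')
        have "a i' = i' - 1" using K1 nJ' unfolding a_def by auto
        then show ?thesis using ai aeq ii by simp
      next
        case (K2 t')
        have ai': "a i' = i' - (l - k - 1)" using K2 nJ' unfolding a_def by auto
        have e: "i' = i + (l - k - 2)" using ai ai' aeq by simp
        define s where "s = t - t'"
        have "sg k = l + m2 * s" using e \<open>i = k + 1 + m2 * t\<close> \<open>i' = jj + m2 * t'\<close> jj_sg unfolding s_def
          by (simp add: algebra_simps)
        note iso2 = tM_iso[OF tM this]
        have Ni: "Nof M i = sc t' (sc s M)" using \<open>i = k + 1 + m2 * t\<close> Nof_K1 sc_sc s_def by simp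
        have Ni': "Nof M i' = sc t' (dual M)" using K2 Nof_K2 by simp
        show ?thesis unfolding Ni Ni' using sc_mono[OF iso2(1)] sc_olength iso2(2) e lk by simp
      qed
    next
      case (K2 t)
      have ai: "a i = i - (l - k - 1)" using K2 nJ unfolding a_def by auto
      show ?thesis using i'
      proof (cases rule: I_cases)
        case J then show ?thesis using nJ' by simp
      next
        case (K1 t')
        have "a i' = i' - 1" using K1 nJ' unfolding a_def by auto
        then show ?thesis using ai aeq ii lk by simp
      next
        case (K2 t')
        have "a i' = i' - (l - k - 1)" using K2 nJ' unfolding a_def by auto
        then show ?thesis using ai aeq ii by simp
      qed
    qed
  qed
  show ?thesis by (rule bracket_chain[OF JI Jch br brJ same refl add])
qed

lemma Nof_XG: assumes tM: "tgt M" shows "Nof M \<in> XG n OL \<pi> B Ibar"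
  unfolding XG_def Let_def mem_Collect_eq
proof (intro conjI)
  show "\<forall>i. i \<notin> I \<longrightarrow> Nof M i = {}" using Nof_out by blast
  show "\<forall>i\<in>I. Defs.lattice n OL (Nof M i)" using Nof_lat[OF tM] by blast
  show "\<forall>i\<in>I. \<forall>i'\<in>I. i < i' \<longrightarrow> Nof M i \<subseteq> Nof M i' \<and> olength OL (Nof M i) (Nof M i') = nat (i' - i)"
    by (rule Nof_chain[OF tM])
  show "\<forall>i\<in>I. Nof M (i + m2) = vsc (inverse \<pi>) ` Nof M i" using Nof_per by blast
  show "\<exists>d. \<forall>i\<in>I. dual (Nof M i) = Nof M (- i + m2 * d)" using Nof_dual[OF tM] by blast
qed

lemma Nof_fib: assumes tM: "tgt M" shows "fib (Nof M)" "Nof M (k + 1) = M"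
proof -
  have "restrict_chain J (Nof M) = Mc"
  proof
    fix i show "restrict_chain J (Nof M) i = Mc i"
      unfolding restrict_chain_def using Nof_J Mc_out by simp
  qed
  then show "fib (Nof M)" unfolding fib_def using Nof_XG[OF tM] by blast
  have "Nof M (k + 1 + m2 * 0) = sc 0 M" by (rule Nof_K1)
  then show "Nof M (k + 1) = M" by simp
qed

lemma main_bij:
  "bij_betw (\<lambda>M. M (k + 1)) {M \<in> XG n OL \<pi> B Ibar. restrict_chain J M = Mc}
     {M. Defs.lattice n OL M \<and> Mc k \<subseteq> M \<and> M \<subseteq> Mc l \<and> vsc \<pi> ` M \<subseteq> Mc k \<and> olength OL (Mc k) M = 1}"
proof -
  have F: "{M \<in> XG n OL \<pi> B Ibar. restrict_chain J M = Mc} = {N. fib N}" unfolding fib_def by blast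
  have T: "{M. Defs.lattice n OL M \<and> Mc k \<subseteq> M \<and> M \<subseteq> Mc l \<and> vsc \<pi> ` M \<subseteq> Mc k \<and> olength OL (Mc k) M = 1}
      = {M. tgt M}" unfolding tgt_def by blast
  have "inj_on (\<lambda>M. M (k + 1)) {N. fib N}"
  proof (rule inj_onI)
    fix N N' assume "N \<in> {N. fib N}" "N' \<in> {N. fib N}" "N (k + 1) = N' (k + 1)"
    then show "N = N'" using inj by simp
  qed
  moreover have "(\<lambda>M. M (k + 1)) ` {N. fib N} = {M. tgt M}"
  proof
    show "(\<lambda>M. M (k + 1)) ` {N. fib N} \<subseteq> {M. tgt M}" using fwd by auto
    show "{M. tgt M} \<subseteq> (\<lambda>M. M (k + 1)) ` {N. fib N}"
    proof
      fix M assume "M \<in> {M. tgt M}"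
      then have "tgt M" by simp
      then have f: "Nof M \<in> {N. fib N}" and e: "M = Nof M (k + 1)" using Nof_fib by auto
      show "M \<in> (\<lambda>M. M (k + 1)) ` {N. fib N}" by (rule image_eqI[where f="\<lambda>M. M (k + 1)", OF e f])
    qed
  qed
  ultimately show ?thesis unfolding F T bij_betw_def by blast
qed

end

hide_const (open) Lattice.lattice

theorem lemma2p3:
  fixes v :: "'L::field \<Rightarrow> int" and OL :: "'L set" and \<pi> :: 'L
    and n :: nat and B :: "(nat \<Rightarrow> 'L) \<Rightarrow> (nat \<Rightarrow> 'L) \<Rightarrow> 'L"
    and Jbar :: "int set" and k :: int and Mc :: "int \<Rightarrow> (nat \<Rightarrow> 'L) set"
  assumes "discrete_valued v OL \<pi>"
    and "n \<ge> 1"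
    and "symplectic n B"
    and "Jbar \<noteq> {}" and "symmetric_type n Jbar"
    and "k \<in> invimg n Jbar" and "k + 1 \<notin> invimg n Jbar"
    and "Mc \<in> XG n OL \<pi> B Jbar"
  shows "let J = invimg n Jbar;
             Ibar = Jbar \<union> {(k + 1) mod (2 * int n), (- (k + 1)) mod (2 * int n)};
             l = (LEAST l. l \<in> J \<and> k < l)
         in bij_betw (\<lambda>M. M (k + 1))
              {M \<in> XG n OL \<pi> B Ibar. restrict_chain J M = Mc}
              {M. lattice n OL M \<and> Mc k \<subseteq> M \<and> M \<subseteq> Mc l \<and>
                  vsc \<pi> ` M \<subseteq> Mc k \<and> olength OL (Mc k) M = 1}"
proof -
  interpret mainctx v OL \<pi> n B Jbar k Mc
    using assms by unfold_locales auto
  show ?thesis unfolding Let_def l_def[symmetric] by (rule main_bij)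
qed

end
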